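(* Let $A$ be a finite dimensional Hopf algebra over a field $k$, let $n$ be a positive integer, and let $M$ be a finite dimensional $A$-module for which $M\otimes M^*\simeq M^*\otimes M$ as $A$-modules. Then $M$ is projective if and only if $M^{\otimes n}$ is projective.
   Context: $M^*=\mathrm{Hom}_k(M,k)$ is the dual $A$-module with $(a\cdot f)(m)=f(S(a)m)$, $S$ the antipode; tensor products of $A$-modules are $A$-modules via the coproduct. *)

theory Defs
  imports "Jordan_Normal_Form.Matrix"
begin

(* A finite dimensional Hopf algebra A over a field 'k, presented by structure
   constants with respect to a basis e_0,...,e_{d-1}:
     e_i e_j        = \<Sum>_l mu i j l e_l
     1              = \<Sum>_l eta l e_l
     Delta(e_l)     = \<Sum>_{i,j} delta l i j (e_i \<otimes> e_j)
     eps(e_l)       = eps l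
     S(e_i)         = \<Sum>_j antip i j e_j                                        *)
record 'k hopf_data =
  hdim  :: nat
  mu    :: "nat \<Rightarrow> nat \<Rightarrow> nat \<Rightarrow> 'k"
  eta   :: "nat \<Rightarrow> 'k"
  delta :: "nat \<Rightarrow> nat \<Rightarrow> nat \<Rightarrow> 'k"
  eps   :: "nat \<Rightarrow> 'k"
  antip :: "nat \<Rightarrow> nat \<Rightarrow> 'k"

definition kd :: "nat \<Rightarrow> nat \<Rightarrow> 'k::field" where
  "kd a b = (if a = b then 1 else 0)"

definition hopf_algebra :: "'k::field hopf_data \<Rightarrow> bool" where
  "hopf_algebra H \<longleftrightarrow> (let d = hdim H in
     \<comment> \<open>associativity\<close>
     (\<forall>i<d. \<forall>j<d. \<forall>k<d. \<forall>p<d.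
        (\<Sum>l<d. mu H i j l * mu H l k p) = (\<Sum>l<d. mu H j k l * mu H i l p)) \<and>
     \<comment> \<open>unit\<close>
     (\<forall>j<d. \<forall>p<d. (\<Sum>l<d. eta H l * mu H l j p) = kd j p \<and>
                   (\<Sum>l<d. eta H l * mu H j l p) = kd j p) \<and>
     \<comment> \<open>coassociativity\<close>
     (\<forall>l<d. \<forall>a<d. \<forall>b<d. \<forall>c<d.
        (\<Sum>i<d. delta H l i c * delta H i a b) = (\<Sum>j<d. delta H l a j * delta H j b c)) \<and>
     \<comment> \<open>counit\<close>
     (\<forall>l<d. \<forall>j<d. (\<Sum>i<d. eps H i * delta H l i j) = kd l j \<and>
                   (\<Sum>i<d. eps H i * delta H l j i) = kd l j) \<and>
     \<comment> \<open>comultiplication is an algebra map\<close>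
     (\<forall>i<d. \<forall>j<d. \<forall>a<d. \<forall>b<d.
        (\<Sum>l<d. mu H i j l * delta H l a b) =
        (\<Sum>p<d. \<Sum>q<d. \<Sum>r<d. \<Sum>s<d.
            delta H i p q * delta H j r s * mu H p r a * mu H q s b)) \<and>
     (\<forall>a<d. \<forall>b<d. (\<Sum>l<d. eta H l * delta H l a b) = eta H a * eta H b) \<and>
     \<comment> \<open>counit is an algebra map\<close>
     (\<forall>i<d. \<forall>j<d. (\<Sum>l<d. mu H i j l * eps H l) = eps H i * eps H j) \<and>
     (\<Sum>l<d. eta H l * eps H l) = 1 \<and>
     \<comment> \<open>antipode axioms  m(S\<otimes>id)Delta = eta eps = m(id\<otimes>S)Delta\<close>
     (\<forall>l<d. \<forall>q<d.
        (\<Sum>i<d. \<Sum>j<d. \<Sum>p<d. delta H l i j * antip H i p * mu H p j q) = eps H l * eta H q \<and>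
        (\<Sum>i<d. \<Sum>j<d. \<Sum>p<d. delta H l i j * antip H j p * mu H i p q) = eps H l * eta H q))"

(* a finite dimensional A-module: dimension m and the matrices rho(e_i) (m x m) *)
type_synonym 'k amod = "nat \<times> (nat \<Rightarrow> 'k mat)"

definition lc :: "nat \<Rightarrow> nat \<Rightarrow> (nat \<Rightarrow> 'k::field) \<Rightarrow> (nat \<Rightarrow> 'k mat) \<Rightarrow> 'k mat" where
  "lc d m c R = mat m m (\<lambda>(r,s). \<Sum>l<d. c l * R l $$ (r,s))"

definition is_mod :: "'k::field hopf_data \<Rightarrow> 'k amod \<Rightarrow> bool" where
  "is_mod H M \<longleftrightarrow> (let d = hdim H; m = fst M; \<rho> = snd M in
     (\<forall>i<d. \<rho> i \<in> carrier_mat m m) \<and>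
     (\<forall>i<d. \<forall>j<d. \<rho> i * \<rho> j = lc d m (mu H i j) \<rho>) \<and>
     lc d m (eta H) \<rho> = 1\<^sub>m m)"

definition kron :: "'k::field mat \<Rightarrow> 'k mat \<Rightarrow> 'k mat" where
  "kron A B = mat (dim_row A * dim_row B) (dim_col A * dim_col B)
     (\<lambda>(r,s). A $$ (r div dim_row B, s div dim_col B) * B $$ (r mod dim_row B, s mod dim_col B))"

definition tensor :: "'k::field hopf_data \<Rightarrow> 'k amod \<Rightarrow> 'k amod \<Rightarrow> 'k amod" where
  "tensor H M N = (fst M * fst N, (\<lambda>l. mat (fst M * fst N) (fst M * fst N)
     (\<lambda>(r,s). \<Sum>i<hdim H. \<Sum>j<hdim H. delta H l i j * kron (snd M i) (snd N j) $$ (r,s))))"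

(* dual module M^*, (a.f)(x) = f(S(a) x); in the dual basis rho^*(a) = rho(S a)^T *)
definition dual :: "'k::field hopf_data \<Rightarrow> 'k amod \<Rightarrow> 'k amod" where
  "dual H M = (fst M, (\<lambda>i. transpose_mat (lc (hdim H) (fst M) (antip H i) (snd M))))"

(* tensor powers M^{\<otimes> n}, n \<ge> 1 (n = 0 gives the trivial module k) *)
fun tpow :: "'k::field hopf_data \<Rightarrow> 'k amod \<Rightarrow> nat \<Rightarrow> 'k amod" where
  "tpow H M 0 = (1, (\<lambda>i. mat 1 1 (\<lambda>_. eps H i)))"
| "tpow H M (Suc 0) = M"
| "tpow H M (Suc (Suc n)) = tensor H M (tpow H M (Suc n))"

definition hom :: "'k::field hopf_data \<Rightarrow> 'k amod \<Rightarrow> 'k amod \<Rightarrow> 'k mat \<Rightarrow> bool" where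
  "hom H M N T \<longleftrightarrow> T \<in> carrier_mat (fst N) (fst M) \<and>
     (\<forall>i<hdim H. T * snd M i = snd N i * T)"

definition iso :: "'k::field hopf_data \<Rightarrow> 'k amod \<Rightarrow> 'k amod \<Rightarrow> bool" where
  "iso H M N \<longleftrightarrow> (\<exists>T T'. hom H M N T \<and> hom H N M T' \<and>
      T * T' = 1\<^sub>m (fst N) \<and> T' * T = 1\<^sub>m (fst M))"

definition surj_mat :: "'k::field mat \<Rightarrow> bool" where
  "surj_mat T \<longleftrightarrow> (\<forall>v \<in> carrier_vec (dim_row T). \<exists>w \<in> carrier_vec (dim_col T). T *\<^sub>v w = v)"

(* projective: lifting property against surjective homomorphisms
   (in the category of finite dimensional A-modules) *)
definition projective :: "'k::field hopf_data \<Rightarrow> 'k amod \<Rightarrow> bool" where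
  "projective H M \<longleftrightarrow> (\<forall>N P g f. is_mod H N \<and> is_mod H P \<and> hom H N P g \<and> surj_mat g \<and>
      hom H M P f \<longrightarrow> (\<exists>h. hom H M N h \<and> g * h = f))"

end

theory Submission
  imports Defs
begin

lemma sum_split_mult:
  "(\<Sum>t<a*b. f t) = (\<Sum>u<a. \<Sum>v<b. f (u*b+(v::nat)))"
proof (induction a)
  case 0 then show ?case by simp
next
  case (Suc a)
  have eq: "{..<Suc a * b} = {..<a*b} \<union> {a*b..<a*b+b}" by auto
  have "(\<Sum>t<Suc a*b. f t) = sum f ({..<a*b} \<union> {a*b..<a*b+b})" by (simp only: eq)
  also have "\<dots> = (\<Sum>t<a*b. f t) + (\<Sum>t\<in>{a*b..<a*b+b}. f t)"
    by (rule sum.union_disjoint) auto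
  also have "(\<Sum>t\<in>{a*b..<a*b+b}. f t) = (\<Sum>v<b. f (a*b+v))"
    using sum.shift_bounds_nat_ivl[of f 0 "a*b" b] by (simp add: atLeast0LessThan add.commute)
  finally show ?case using Suc by simp
qed

lemma kron_carrier: "kron A B \<in> carrier_mat (dim_row A * dim_row B) (dim_col A * dim_col B)"
  by (simp add: kron_def)

lemma kron_dims[simp]: "dim_row (kron A B) = dim_row A * dim_row B"
  "dim_col (kron A B) = dim_col A * dim_col B"
  by (simp_all add: kron_def)

lemma kron_index:
  assumes "r < dim_row A * dim_row B" "s < dim_col A * dim_col B"
  shows "kron A B $$ (r,s) = A $$ (r div dim_row B, s div dim_col B) * B $$ (r mod dim_row B, s mod dim_col B)"
  using assms by (simp add: kron_def)

lemma divmod_lt: "r < a * (b::nat) \<Longrightarrow> r div b < a \<and> r mod b < b"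
  by (metis less_mult_imp_div_less mod_less_divisor mult_zero_right neq0_conv not_less0)

lemma idx_lt: "u < b \<Longrightarrow> v < q \<Longrightarrow> u*q+v < b*(q::nat)"
proof -
  assume "u < b" "v < q"
  then have "u*q+v < u*q+q" by simp
  also have "\<dots> = Suc u * q" by simp
  also have "\<dots> \<le> b*q" using \<open>u < b\<close> by (intro mult_le_mono1) simp
  finally show ?thesis .
qed

lemma idx_div: "v < q \<Longrightarrow> (u*q+v) div q = (u::nat)" by simp
lemma idx_mod: "v < q \<Longrightarrow> (u*q+v) mod q = (v::nat)" by simp

lemma kron_mult:
  assumes A: "A \<in> carrier_mat a b" and B: "B \<in> carrier_mat b c"
    and C: "C \<in> carrier_mat p q" and D: "D \<in> carrier_mat q r"
  shows "kron A C * kron B D = kron (A*B) (C*D)"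
proof (rule eq_matI)
  fix i j assume i: "i < dim_row (kron (A*B) (C*D))" and j: "j < dim_col (kron (A*B) (C*D))"
  have i': "i < a*p" and j': "j < c*r" using i j A B C D by auto
  have di: "i div p < a" "i mod p < p" using divmod_lt[OF i'] by auto
  have dj: "j div r < c" "j mod r < r" using divmod_lt[OF j'] by auto
  have "(kron A C * kron B D) $$ (i,j) = (\<Sum>t<b*q. kron A C $$ (i,t) * kron B D $$ (t,j))"
    using i' j' A B C D by (simp add: scalar_prod_def atLeast0LessThan)
  also have "\<dots> = (\<Sum>u<b. \<Sum>v<q. kron A C $$ (i,u*q+v) * kron B D $$ (u*q+v,j))"
    by (rule sum_split_mult)
  also have "\<dots> = (\<Sum>u<b. \<Sum>v<q. (A $$ (i div p, u) * B $$ (u, j div r)) * (C $$ (i mod p, v) * D $$ (v, j mod r)))"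
  proof (intro sum.cong refl)
    fix u v assume u: "u \<in> {..<b}" and v: "v \<in> {..<q}"
    have uv: "u*q+v < b*q" using u v by (simp add: idx_lt)
    show "kron A C $$ (i,u*q+v) * kron B D $$ (u*q+v,j) = (A $$ (i div p, u) * B $$ (u, j div r)) * (C $$ (i mod p, v) * D $$ (v, j mod r))"
      using A B C D i' j' uv u v by (simp add: kron_index)
  qed
  also have "\<dots> = (\<Sum>u<b. A $$ (i div p, u) * B $$ (u, j div r)) * (\<Sum>v<q. C $$ (i mod p, v) * D $$ (v, j mod r))"
    by (simp add: sum_product)
  also have "\<dots> = kron (A*B) (C*D) $$ (i,j)"
    using A B C D i' j' di dj by (simp add: kron_index scalar_prod_def atLeast0LessThan)
  finally show "(kron A C * kron B D) $$ (i,j) = kron (A*B) (C*D) $$ (i,j)" .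
qed (use A B C D in auto)

lemma e1: "(i::nat) div c div b = i div (b*c)" by (metis div_mult2_eq mult.commute)
lemma e3: "(i::nat) div c mod b = i mod (b*c) div c"
proof (cases "c = 0")
  case True then show ?thesis by simp
next
  case False
  have "i mod (c*b) = c*(i div c mod b) + i mod c" by (rule mod_mult2_eq)
  then have "i mod (c*b) div c = i div c mod b" using False by simp
  then show ?thesis by (simp add: mult.commute)
qed
lemma e5: "(i::nat) mod (b*c) mod c = i mod c" by (simp add: mod_mod_cancel)

lemma kron_assoc: "kron (kron A B) C = kron A (kron B C)"
proof (rule eq_matI)
  fix i j assume i: "i < dim_row (kron A (kron B C))" and j: "j < dim_col (kron A (kron B C))"
  let ?a = "dim_row A" and ?b = "dim_row B" and ?c = "dim_row C"
  let ?a' = "dim_col A" and ?b' = "dim_col B" and ?c' = "dim_col C"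
  have i1: "i < ?a * (?b * ?c)" and j1: "j < ?a' * (?b' * ?c')" using i j by auto
  have i2: "i < (?a * ?b) * ?c" and j2: "j < (?a' * ?b') * ?c'" using i1 j1 by (simp_all add: mult.assoc)
  have a1: "i div ?c < ?a * ?b" using divmod_lt[OF i2] by auto
  have a2: "j div ?c' < ?a' * ?b'" using divmod_lt[OF j2] by auto
  have b1: "i mod (?b*?c) < ?b * ?c" using divmod_lt[OF i1] by auto
  have b2: "j mod (?b'*?c') < ?b' * ?c'" using divmod_lt[OF j1] by auto
  note ee = e1[of i ?c ?b] e1[of j ?c' ?b'] e3[of i ?c ?b] e3[of j ?c' ?b'] e5[of i ?b ?c] e5[of j ?b' ?c']
  show "kron (kron A B) C $$ (i,j) = kron A (kron B C) $$ (i,j)"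
    using i1 j1 i2 j2 a1 a2 b1 b2 by (simp add: kron_index ee mult.assoc)
qed (simp_all add: mult.assoc)

lemma kron_one: "kron (1\<^sub>m a) (1\<^sub>m b) = (1\<^sub>m (a*b) :: 'k::field mat)"
proof (rule eq_matI)
  fix i j assume i: "i < dim_row (1\<^sub>m (a*b) :: 'k mat)" and j: "j < dim_col (1\<^sub>m (a*b) :: 'k mat)"
  then have i': "i < a*b" and j': "j < a*b" by auto
  have "(i div b = j div b \<and> i mod b = j mod b) \<longleftrightarrow> i = j"
    by (metis div_mult_mod_eq)
  then show "kron (1\<^sub>m a) (1\<^sub>m b) $$ (i,j) = (1\<^sub>m (a*b) :: 'k mat) $$ (i,j)"
    using i' j' divmod_lt[OF i'] divmod_lt[OF j'] by (auto simp: kron_index)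
qed auto

lemma kron_one_right: "kron A (1\<^sub>m 1) = A"
  by (rule eq_matI) (auto simp: kron_index)

lemma kron_one_left: "kron (1\<^sub>m 1) A = A"
  by (rule eq_matI) (auto simp: kron_index)

lemma kron_carrier_mat: "A \<in> carrier_mat a b \<Longrightarrow> B \<in> carrier_mat c d \<Longrightarrow> kron A B \<in> carrier_mat (a*c) (b*d)"
  by (simp add: kron_def)

definition mlc :: "'a set \<Rightarrow> ('a \<Rightarrow> 'k::field) \<Rightarrow> ('a \<Rightarrow> 'k mat) \<Rightarrow> nat \<Rightarrow> nat \<Rightarrow> 'k mat" where
  "mlc X c K a b = mat a b (\<lambda>(r,s). \<Sum>x\<in>X. c x * K x $$ (r,s))"

lemma mlc_carrier[simp]: "mlc X c K a b \<in> carrier_mat a b"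
  by (simp add: mlc_def)
lemma mlc_dims[simp]: "dim_row (mlc X c K a b) = a" "dim_col (mlc X c K a b) = b"
  by (simp_all add: mlc_def)
lemma mlc_index: "r < a \<Longrightarrow> s < b \<Longrightarrow> mlc X c K a b $$ (r,s) = (\<Sum>x\<in>X. c x * K x $$ (r,s))"
  by (simp add: mlc_def)

lemma mlc_cong: "(\<And>x. x \<in> X \<Longrightarrow> c x * K x $$ (r,s) = c' x * K' x $$ (r,s)) \<Longrightarrow> True" by simp

lemma mlc_eqI:
  assumes "\<And>x r s. x \<in> X \<Longrightarrow> r < a \<Longrightarrow> s < b \<Longrightarrow> K x $$ (r,s) = K' x $$ (r,s)"
  shows "mlc X c K a b = mlc X c K' a b"
  by (rule eq_matI) (auto simp: mlc_index assms intro!: sum.cong)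

lemma mlc_eqI2:
  assumes "\<And>x. x \<in> X \<Longrightarrow> K x = K' x"
  shows "mlc X c K a b = mlc X c K' a b"
  by (rule eq_matI) (auto simp: mlc_index assms intro!: sum.cong)

lemma mlc_mult_left:
  assumes X: "finite X" and K: "\<And>x. x \<in> X \<Longrightarrow> K x \<in> carrier_mat a b" and A: "A \<in> carrier_mat p a"
  shows "A * mlc X c K a b = mlc X c (\<lambda>x. A * K x) p b"
proof (rule eq_matI)
  fix r s assume r: "r < dim_row (mlc X c (\<lambda>x. A * K x) p b)" and s: "s < dim_col (mlc X c (\<lambda>x. A * K x) p b)"
  then have r': "r < p" and s': "s < b" by auto
  have "(A * mlc X c K a b) $$ (r,s) = (\<Sum>t<a. A $$ (r,t) * (\<Sum>x\<in>X. c x * K x $$ (t,s)))"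
    using A r' s' by (simp add: scalar_prod_def atLeast0LessThan mlc_index)
  also have "\<dots> = (\<Sum>x\<in>X. c x * (\<Sum>t<a. A $$ (r,t) * K x $$ (t,s)))"
    by (simp add: sum_distrib_left sum_distrib_right sum.swap[of _ X] mult.left_commute)
  also have "\<dots> = (\<Sum>x\<in>X. c x * (A * K x) $$ (r,s))"
  proof (rule sum.cong[OF refl])
    fix x assume x: "x \<in> X"
    from K[OF x] A r' s' show "c x * (\<Sum>t<a. A $$ (r,t) * K x $$ (t,s)) = c x * (A * K x) $$ (r,s)"
      by (simp add: scalar_prod_def atLeast0LessThan)
  qed
  also have "\<dots> = mlc X c (\<lambda>x. A * K x) p b $$ (r,s)"
    using r' s' by (simp add: mlc_index)
  finally show "(A * mlc X c K a b) $$ (r,s) = mlc X c (\<lambda>x. A * K x) p b $$ (r,s)" .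
qed (use A in auto)

lemma mlc_mult_right:
  assumes X: "finite X" and K: "\<And>x. x \<in> X \<Longrightarrow> K x \<in> carrier_mat a b" and B: "B \<in> carrier_mat b q"
  shows "mlc X c K a b * B = mlc X c (\<lambda>x. K x * B) a q"
proof (rule eq_matI)
  fix r s assume r: "r < dim_row (mlc X c (\<lambda>x. K x * B) a q)" and s: "s < dim_col (mlc X c (\<lambda>x. K x * B) a q)"
  then have r': "r < a" and s': "s < q" by auto
  have "(mlc X c K a b * B) $$ (r,s) = (\<Sum>t<b. (\<Sum>x\<in>X. c x * K x $$ (r,t)) * B $$ (t,s))"
    using B r' s' by (simp add: scalar_prod_def atLeast0LessThan mlc_index)
  also have "\<dots> = (\<Sum>x\<in>X. c x * (\<Sum>t<b. K x $$ (r,t) * B $$ (t,s)))"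
    by (simp add: sum_distrib_left sum_distrib_right sum.swap[of _ X] mult.assoc)
  also have "\<dots> = (\<Sum>x\<in>X. c x * (K x * B) $$ (r,s))"
  proof (rule sum.cong[OF refl])
    fix x assume x: "x \<in> X"
    from K[OF x] B r' s' show "c x * (\<Sum>t<b. K x $$ (r,t) * B $$ (t,s)) = c x * (K x * B) $$ (r,s)"
      by (simp add: scalar_prod_def atLeast0LessThan)
  qed
  also have "\<dots> = mlc X c (\<lambda>x. K x * B) a q $$ (r,s)"
    using r' s' by (simp add: mlc_index)
  finally show "(mlc X c K a b * B) $$ (r,s) = mlc X c (\<lambda>x. K x * B) a q $$ (r,s)" .
qed (use B in auto)

lemma tensor_fst[simp]: "fst (tensor H M N) = fst M * fst N"
  by (simp add: tensor_def)

lemma tensor_mlc: "snd (tensor H M N) l =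
   mlc ({..<hdim H} \<times> {..<hdim H}) (\<lambda>(i,j). delta H l i j) (\<lambda>(i,j). kron (snd M i) (snd N j)) (fst M * fst N) (fst M * fst N)"
  unfolding tensor_def mlc_def by (simp add: sum.cartesian_product case_prod_beta)

definition wfm :: "'k::field hopf_data \<Rightarrow> 'k amod \<Rightarrow> bool" where
  "wfm H M \<longleftrightarrow> (\<forall>i<hdim H. snd M i \<in> carrier_mat (fst M) (fst M))"

lemma wfD: "wfm H M \<Longrightarrow> i < hdim H \<Longrightarrow> snd M i \<in> carrier_mat (fst M) (fst M)"
  by (simp add: wfm_def)

lemma is_mod_wf: "is_mod H M \<Longrightarrow> wfm H M"
  by (simp add: is_mod_def wfm_def Let_def)

lemma wf_tensor: "wfm H (tensor H M N)"
  by (simp add: wfm_def tensor_mlc)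

lemma hom_tensor:
  assumes M: "wfm H M" and N: "wfm H N" and M': "wfm H M'" and N': "wfm H N'"
    and f: "hom H M M' f" and g: "hom H N N' g"
  shows "hom H (tensor H M N) (tensor H M' N') (kron f g)"
  unfolding hom_def
proof (intro conjI allI impI)
  show "kron f g \<in> carrier_mat (fst (tensor H M' N')) (fst (tensor H M N))"
    using f g by (auto simp: hom_def)
  fix l assume l: "l < hdim H"
  let ?X = "{..<hdim H} \<times> {..<hdim H}"
  have fc: "f \<in> carrier_mat (fst M') (fst M)" and gc: "g \<in> carrier_mat (fst N') (fst N)"
    using f g by (auto simp: hom_def)
  have "kron f g * snd (tensor H M N) l = mlc ?X (\<lambda>(i,j). delta H l i j) (\<lambda>x. kron f g * (case x of (i,j) \<Rightarrow> kron (snd M i) (snd N j))) (fst M' * fst N') (fst M * fst N)"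
    unfolding tensor_mlc
    by (rule mlc_mult_left) (use fc gc M N in \<open>auto intro!: kron_carrier_mat dest: wfD\<close>)
  also have "\<dots> = mlc ?X (\<lambda>(i,j). delta H l i j) (\<lambda>x. (case x of (i,j) \<Rightarrow> kron (snd M' i) (snd N' j)) * kron f g) (fst M' * fst N') (fst M * fst N)"
  proof (rule mlc_eqI2)
    fix x assume x: "x \<in> ?X"
    obtain i j where ij: "x = (i,j)" "i < hdim H" "j < hdim H" using x by auto
    have "kron f g * kron (snd M i) (snd N j) = kron (f * snd M i) (g * snd N j)"
      by (rule kron_mult) (use fc gc wfD[OF M ij(2)] wfD[OF N ij(3)] in auto)
    also have "\<dots> = kron (snd M' i * f) (snd N' j * g)"
      using f g ij by (simp add: hom_def)
    also have "\<dots> = kron (snd M' i) (snd N' j) * kron f g"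
      by (rule kron_mult[symmetric]) (use fc gc wfD[OF M' ij(2)] wfD[OF N' ij(3)] in auto)
    finally show "kron f g * (case x of (i,j) \<Rightarrow> kron (snd M i) (snd N j)) = (case x of (i,j) \<Rightarrow> kron (snd M' i) (snd N' j)) * kron f g"
      using ij by simp
  qed
  also have "\<dots> = snd (tensor H M' N') l * kron f g"
    unfolding tensor_mlc
    by (rule mlc_mult_right[symmetric]) (use fc gc M' N' in \<open>auto intro!: kron_carrier_mat dest: wfD\<close>)
  finally show "kron f g * snd (tensor H M N) l = snd (tensor H M' N') l * kron f g" .
qed

lemma mlc_coeff_cong: "(\<And>x. x \<in> X \<Longrightarrow> c x = c' x) \<Longrightarrow> mlc X c K a b = mlc X c' K a b"
  by (rule eq_matI) (auto simp: mlc_index intro!: sum.cong)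

lemma mlc_smult_out: assumes "\<And>x. x \<in> X \<Longrightarrow> K x \<in> carrier_mat a b"
  shows "mlc X c (\<lambda>x. k \<cdot>\<^sub>m K x) a b = k \<cdot>\<^sub>m mlc X c K a b"
proof (rule eq_matI)
  fix r s assume "r < dim_row (k \<cdot>\<^sub>m mlc X c K a b)" "s < dim_col (k \<cdot>\<^sub>m mlc X c K a b)"
  then have rs: "r < a" "s < b" by auto
  have "mlc X c (\<lambda>x. k \<cdot>\<^sub>m K x) a b $$ (r,s) = (\<Sum>x\<in>X. c x * (k * K x $$ (r,s)))"
    using rs
  proof (simp add: mlc_index, intro sum.cong refl)
    fix x assume "x \<in> X"
    show "c x * (k \<cdot>\<^sub>m K x) $$ (r,s) = c x * (k * K x $$ (r,s))" using assms[OF \<open>x \<in> X\<close>] rs by auto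
  qed
  then show "mlc X c (\<lambda>x. k \<cdot>\<^sub>m K x) a b $$ (r,s) = (k \<cdot>\<^sub>m mlc X c K a b) $$ (r,s)"
    using rs by (simp add: mlc_index sum_distrib_left mult.left_commute)
qed auto

lemma mlc_smult_in: "mlc X (\<lambda>x. k * c x) K a b = k \<cdot>\<^sub>m mlc X c K a b"
  by (rule eq_matI) (auto simp: mlc_index sum_distrib_left mult.assoc intro!: sum.cong)

lemma mlc_collapse:
  assumes "finite X" "finite Y"
  shows "mlc X c (\<lambda>x. mlc Y (d x) K a b) a b = mlc Y (\<lambda>y. \<Sum>x\<in>X. c x * d x y) K a b"
proof (rule eq_matI)
  fix r s assume "r < dim_row (mlc Y (\<lambda>y. \<Sum>x\<in>X. c x * d x y) K a b)" "s < dim_col (mlc Y (\<lambda>y. \<Sum>x\<in>X. c x * d x y) K a b)"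
  then have rs: "r < a" "s < b" by auto
  have "mlc X c (\<lambda>x. mlc Y (d x) K a b) a b $$ (r,s) = (\<Sum>x\<in>X. c x * (\<Sum>y\<in>Y. d x y * K y $$ (r,s)))"
    using rs by (simp add: mlc_index)
  also have "\<dots> = (\<Sum>x\<in>X. \<Sum>y\<in>Y. c x * d x y * K y $$ (r,s))"
    by (simp add: sum_distrib_left mult.assoc)
  also have "\<dots> = (\<Sum>y\<in>Y. \<Sum>x\<in>X. c x * d x y * K y $$ (r,s))"
    by (rule sum.swap)
  also have "\<dots> = mlc Y (\<lambda>y. \<Sum>x\<in>X. c x * d x y) K a b $$ (r,s)"
    using rs by (simp add: mlc_index sum_distrib_right)
  finally show "mlc X c (\<lambda>x. mlc Y (d x) K a b) a b $$ (r,s) = mlc Y (\<lambda>y. \<Sum>x\<in>X. c x * d x y) K a b $$ (r,s)" .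
qed auto

lemma mlc_prod:
  assumes "finite X" "finite Y"
  shows "mlc X c (\<lambda>x. mlc Y (d x) (K x) a b) a b = mlc (X \<times> Y) (\<lambda>(x,y). c x * d x y) (\<lambda>(x,y). K x y) a b"
proof (rule eq_matI)
  fix r s assume "r < dim_row (mlc (X \<times> Y) (\<lambda>(x,y). c x * d x y) (\<lambda>(x,y). K x y) a b)"
     "s < dim_col (mlc (X \<times> Y) (\<lambda>(x,y). c x * d x y) (\<lambda>(x,y). K x y) a b)"
  then have rs: "r < a" "s < b" by auto
  have "mlc X c (\<lambda>x. mlc Y (d x) (K x) a b) a b $$ (r,s) = (\<Sum>x\<in>X. \<Sum>y\<in>Y. c x * d x y * K x y $$ (r,s))"
    using rs by (simp add: mlc_index sum_distrib_left mult.assoc)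
  also have "\<dots> = mlc (X \<times> Y) (\<lambda>(x,y). c x * d x y) (\<lambda>(x,y). K x y) a b $$ (r,s)"
    using rs by (simp add: mlc_index sum.cartesian_product case_prod_beta)
  finally show "mlc X c (\<lambda>x. mlc Y (d x) (K x) a b) a b $$ (r,s) = mlc (X \<times> Y) (\<lambda>(x,y). c x * d x y) (\<lambda>(x,y). K x y) a b $$ (r,s)" .
qed auto

lemma mlc_swap:
  assumes "finite X" "finite Y"
  shows "mlc X c (\<lambda>x. mlc Y d (\<lambda>y. K x y) a b) a b = mlc Y d (\<lambda>y. mlc X c (\<lambda>x. K x y) a b) a b"
proof (rule eq_matI)
  fix r s assume "r < dim_row (mlc Y d (\<lambda>y. mlc X c (\<lambda>x. K x y) a b) a b)" "s < dim_col (mlc Y d (\<lambda>y. mlc X c (\<lambda>x. K x y) a b) a b)"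
  then have rs: "r < a" "s < b" by auto
  have "mlc X c (\<lambda>x. mlc Y d (\<lambda>y. K x y) a b) a b $$ (r,s) = (\<Sum>x\<in>X. \<Sum>y\<in>Y. c x * d y * K x y $$ (r,s))"
    using rs by (simp add: mlc_index sum_distrib_left mult.assoc)
  also have "\<dots> = (\<Sum>y\<in>Y. \<Sum>x\<in>X. c x * d y * K x y $$ (r,s))"
    by (rule sum.swap)
  also have "\<dots> = mlc Y d (\<lambda>y. mlc X c (\<lambda>x. K x y) a b) a b $$ (r,s)"
    using rs by (simp add: mlc_index sum_distrib_left mult.assoc mult.left_commute)
  finally show "mlc X c (\<lambda>x. mlc Y d (\<lambda>y. K x y) a b) a b $$ (r,s) = mlc Y d (\<lambda>y. mlc X c (\<lambda>x. K x y) a b) a b $$ (r,s)" .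
qed auto

lemma mlc_transpose: assumes "\<And>x. x \<in> X \<Longrightarrow> K x \<in> carrier_mat a b"
  shows "transpose_mat (mlc X c K a b) = mlc X c (\<lambda>x. transpose_mat (K x)) b a"
proof (rule eq_matI)
  fix r s assume "r < dim_row (mlc X c (\<lambda>x. transpose_mat (K x)) b a)" "s < dim_col (mlc X c (\<lambda>x. transpose_mat (K x)) b a)"
  then have rs: "r < b" "s < a" by auto
  show "transpose_mat (mlc X c K a b) $$ (r,s) = mlc X c (\<lambda>x. transpose_mat (K x)) b a $$ (r,s)"
    using rs
  proof (simp add: mlc_index, intro sum.cong refl)
    fix x assume "x \<in> X"
    show "c x * K x $$ (s, r) = c x * (K x)\<^sup>T $$ (r, s)" using assms[OF \<open>x \<in> X\<close>] rs by auto
  qed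
qed auto

lemma lc_mlc: "lc d m c R = mlc {..<d} c R m m"
  by (simp add: lc_def mlc_def)

lemma kron_mlc_left:
  assumes "\<And>x. x \<in> X \<Longrightarrow> K x \<in> carrier_mat a b" and "a > 0" "b > 0"
  shows "kron (mlc X c K a b) B = mlc X c (\<lambda>x. kron (K x) B) (a * dim_row B) (b * dim_col B)"
proof (rule eq_matI)
  fix r s assume r: "r < dim_row (mlc X c (\<lambda>x. kron (K x) B) (a * dim_row B) (b * dim_col B))"
    and s: "s < dim_col (mlc X c (\<lambda>x. kron (K x) B) (a * dim_row B) (b * dim_col B))"
  then have r': "r < a * dim_row B" and s': "s < b * dim_col B" by auto
  have d1: "r div dim_row B < a" "s div dim_col B < b" using divmod_lt[OF r'] divmod_lt[OF s'] by auto
  show "kron (mlc X c K a b) B $$ (r,s) = mlc X c (\<lambda>x. kron (K x) B) (a * dim_row B) (b * dim_col B) $$ (r,s)"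
    using r' s' d1
  proof (simp add: mlc_index kron_index sum_distrib_right mult.assoc, intro sum.cong refl)
    fix x assume "x \<in> X"
    show "c x * (K x $$ (r div dim_row B, s div dim_col B) * B $$ (r mod dim_row B, s mod dim_col B)) = c x * kron (K x) B $$ (r, s)"
      using assms(1)[OF \<open>x \<in> X\<close>] r' s' by (auto simp: kron_index)
  qed
qed auto

lemma kron_mlc_right:
  assumes "\<And>x. x \<in> X \<Longrightarrow> K x \<in> carrier_mat a b" and "a > 0" "b > 0"
  shows "kron A (mlc X c K a b) = mlc X c (\<lambda>x. kron A (K x)) (dim_row A * a) (dim_col A * b)"
proof (rule eq_matI)
  fix r s assume r: "r < dim_row (mlc X c (\<lambda>x. kron A (K x)) (dim_row A * a) (dim_col A * b))"
    and s: "s < dim_col (mlc X c (\<lambda>x. kron A (K x)) (dim_row A * a) (dim_col A * b))"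
  then have r': "r < dim_row A * a" and s': "s < dim_col A * b" by auto
  have d1: "r mod a < a" "s mod b < b" using divmod_lt[OF r'] divmod_lt[OF s'] by auto
  show "kron A (mlc X c K a b) $$ (r,s) = mlc X c (\<lambda>x. kron A (K x)) (dim_row A * a) (dim_col A * b) $$ (r,s)"
    using r' s' d1 apply (simp add: mlc_index kron_index sum_distrib_left mult.left_commute)
    apply (intro sum.cong refl)
    subgoal for x using assms(1)[of x] by (auto simp: kron_index)
    done
qed auto

locale hopf =
  fixes H :: "'k::field hopf_data"
  assumes hopf: "hopf_algebra H"
begin

abbreviation "d \<equiv> hdim H"
abbreviation "D \<equiv> {..<hdim H}"
abbreviation "PP \<equiv> {..<hdim H} \<times> {..<hdim H}"

lemmas hc = hopf[unfolded hopf_algebra_def Let_def]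
lemmas hc_unit = hc[THEN conjunct2, THEN conjunct1]
lemmas hc_coassoc = hc[THEN conjunct2, THEN conjunct2, THEN conjunct1]
lemmas hc_counit = hc[THEN conjunct2, THEN conjunct2, THEN conjunct2, THEN conjunct1]
lemmas hc_dmult = hc[THEN conjunct2, THEN conjunct2, THEN conjunct2, THEN conjunct2, THEN conjunct1]
lemmas hc_dunit = hc[THEN conjunct2, THEN conjunct2, THEN conjunct2, THEN conjunct2, THEN conjunct2, THEN conjunct1]
lemmas hc_emult = hc[THEN conjunct2, THEN conjunct2, THEN conjunct2, THEN conjunct2, THEN conjunct2, THEN conjunct2, THEN conjunct1]
lemmas hc_eunit = hc[THEN conjunct2, THEN conjunct2, THEN conjunct2, THEN conjunct2, THEN conjunct2, THEN conjunct2, THEN conjunct2, THEN conjunct1]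
lemmas hc_ant = hc[THEN conjunct2, THEN conjunct2, THEN conjunct2, THEN conjunct2, THEN conjunct2, THEN conjunct2, THEN conjunct2, THEN conjunct2]

lemma ax_coassoc: "l < d \<Longrightarrow> a < d \<Longrightarrow> b < d \<Longrightarrow> c < d \<Longrightarrow>
  (\<Sum>i<d. delta H l i c * delta H i a b) = (\<Sum>j<d. delta H l a j * delta H j b c)"
  using hc_coassoc by blast
lemma ax_counitL: "l < d \<Longrightarrow> j < d \<Longrightarrow> (\<Sum>i<d. eps H i * delta H l i j) = kd l j"
  using hc_counit by blast
lemma ax_counitR: "l < d \<Longrightarrow> j < d \<Longrightarrow> (\<Sum>i<d. eps H i * delta H l j i) = kd l j"
  using hc_counit by blast
lemma ax_unitL: "j < d \<Longrightarrow> p < d \<Longrightarrow> (\<Sum>l<d. eta H l * mu H l j p) = kd j p"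
  using hc_unit by blast
lemma ax_unitR: "j < d \<Longrightarrow> p < d \<Longrightarrow> (\<Sum>l<d. eta H l * mu H j l p) = kd j p"
  using hc_unit by blast
lemma ax_dmult: "i < d \<Longrightarrow> j < d \<Longrightarrow> a < d \<Longrightarrow> b < d \<Longrightarrow>
  (\<Sum>l<d. mu H i j l * delta H l a b) =
  (\<Sum>p<d. \<Sum>q<d. \<Sum>r<d. \<Sum>s<d. delta H i p q * delta H j r s * mu H p r a * mu H q s b)"
  using hc_dmult by blast
lemma ax_dunit: "a < d \<Longrightarrow> b < d \<Longrightarrow> (\<Sum>l<d. eta H l * delta H l a b) = eta H a * eta H b"
  using hc_dunit by blast
lemma ax_emult: "i < d \<Longrightarrow> j < d \<Longrightarrow> (\<Sum>l<d. mu H i j l * eps H l) = eps H i * eps H j"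
  using hc_emult by blast
lemma ax_eunit: "(\<Sum>l<d. eta H l * eps H l) = 1"
  using hc_eunit by blast
lemma ax_antL: "l < d \<Longrightarrow> q < d \<Longrightarrow>
  (\<Sum>i<d. \<Sum>j<d. \<Sum>p<d. delta H l i j * antip H i p * mu H p j q) = eps H l * eta H q"
  using hc_ant by blast
lemma ax_antR: "l < d \<Longrightarrow> q < d \<Longrightarrow>
  (\<Sum>i<d. \<Sum>j<d. \<Sum>p<d. delta H l i j * antip H j p * mu H i p q) = eps H l * eta H q"
  using hc_ant by blast

lemma kd_sum_left[simp]: "i < n \<Longrightarrow> (\<Sum>x<n. kd i x * f x) = (f i::'k)"
proof -
  assume "i < n"
  have "(\<Sum>x<n. kd i x * f x) = (\<Sum>x\<in>{..<n}. if x = i then f x else 0)"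
    by (rule sum.cong) (auto simp: kd_def)
  also have "\<dots> = f i" using \<open>i < n\<close> by simp
  finally show ?thesis .
qed
lemma kd_sum_right[simp]: "i < n \<Longrightarrow> (\<Sum>x<n. kd x i * f x) = (f i::'k)"
proof -
  assume "i < n"
  have "(\<Sum>x<n. kd x i * f x) = (\<Sum>x\<in>{..<n}. if x = i then f x else 0)"
    by (rule sum.cong) (auto simp: kd_def)
  also have "\<dots> = f i" using \<open>i < n\<close> by simp
  finally show ?thesis .
qed

lemma scalar_CA:
  fixes g :: "nat \<Rightarrow> nat \<Rightarrow> nat \<Rightarrow> 'k"
  assumes i: "i < d"
  shows "(\<Sum>p<d. \<Sum>q<d. delta H i p q * (\<Sum>p'<d. \<Sum>q'<d. delta H p p' q' * g p' q' q)) =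
         (\<Sum>p<d. \<Sum>q<d. delta H i p q * (\<Sum>q'<d. \<Sum>q''<d. delta H q q' q'' * g p q' q''))"
proof -
  let ?F = "\<lambda>p q p' q'. delta H i p q * delta H p p' q' * g p' q' q"
  have "(\<Sum>p<d. \<Sum>q<d. delta H i p q * (\<Sum>p'<d. \<Sum>q'<d. delta H p p' q' * g p' q' q)) =
        (\<Sum>p<d. \<Sum>q<d. \<Sum>p'<d. \<Sum>q'<d. ?F p q p' q')"
    by (simp add: sum_distrib_left mult.assoc)
  also have "\<dots> = (\<Sum>q<d. \<Sum>p<d. \<Sum>p'<d. \<Sum>q'<d. ?F p q p' q')" by (rule sum.swap)
  also have "\<dots> = (\<Sum>q<d. \<Sum>p'<d. \<Sum>p<d. \<Sum>q'<d. ?F p q p' q')" by (rule sum.cong[OF refl sum.swap])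
  also have "\<dots> = (\<Sum>q<d. \<Sum>p'<d. \<Sum>q'<d. \<Sum>p<d. ?F p q p' q')"
    by (rule sum.cong[OF refl sum.cong[OF refl sum.swap]])
  also have "\<dots> = (\<Sum>p'<d. \<Sum>q<d. \<Sum>q'<d. \<Sum>p<d. ?F p q p' q')" by (rule sum.swap)
  also have "\<dots> = (\<Sum>p'<d. \<Sum>q'<d. \<Sum>q<d. \<Sum>p<d. ?F p q p' q')" by (rule sum.cong[OF refl sum.swap])
  also have "\<dots> = (\<Sum>p'<d. \<Sum>q'<d. \<Sum>q<d. (\<Sum>t<d. delta H i p' t * delta H t q' q) * g p' q' q)"
  proof (intro sum.cong refl)
    fix p' q' q assume "p' \<in> D" "q' \<in> D" "q \<in> D"
    then have "(\<Sum>p<d. ?F p q p' q') = (\<Sum>p<d. delta H i p q * delta H p p' q') * g p' q' q"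
      by (simp add: sum_distrib_right)
    also have "\<dots> = (\<Sum>t<d. delta H i p' t * delta H t q' q) * g p' q' q"
      using ax_coassoc[OF i, of p' q' q] \<open>p' \<in> D\<close> \<open>q' \<in> D\<close> \<open>q \<in> D\<close> by simp
    finally show "(\<Sum>p<d. ?F p q p' q') = (\<Sum>t<d. delta H i p' t * delta H t q' q) * g p' q' q" .
  qed
  also have "\<dots> = (\<Sum>p'<d. \<Sum>q'<d. \<Sum>q<d. \<Sum>t<d. delta H i p' t * delta H t q' q * g p' q' q)"
    by (simp add: sum_distrib_right)
  also have "\<dots> = (\<Sum>p'<d. \<Sum>q'<d. \<Sum>t<d. \<Sum>q<d. delta H i p' t * delta H t q' q * g p' q' q)"
    by (rule sum.cong[OF refl sum.cong[OF refl sum.swap]])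
  also have "\<dots> = (\<Sum>p'<d. \<Sum>t<d. \<Sum>q'<d. \<Sum>q<d. delta H i p' t * delta H t q' q * g p' q' q)"
    by (rule sum.cong[OF refl sum.swap])
  also have "\<dots> = (\<Sum>p<d. \<Sum>q<d. delta H i p q * (\<Sum>q'<d. \<Sum>q''<d. delta H q q' q'' * g p q' q''))"
    by (simp add: sum_distrib_left mult.assoc)
  finally show ?thesis .
qed

lemma sum_pair: "sum f (A \<times> B) = (\<Sum>a\<in>A. \<Sum>b\<in>B. f (a,b))"
  by (simp add: sum.cartesian_product)

lemma mlc_CA:
  assumes i: "i < d" and u: "u < a" and v: "v < b"
  shows "mlc PP (\<lambda>(p,q). delta H i p q) (\<lambda>(p,q). mlc PP (\<lambda>(p',q'). delta H p p' q') (\<lambda>(p',q'). L p' q' q) a b) a b $$ (u,v) =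
         mlc PP (\<lambda>(p,q). delta H i p q) (\<lambda>(p,q). mlc PP (\<lambda>(q',q''). delta H q q' q'') (\<lambda>(q',q''). L p q' q'') a b) a b $$ (u,v)"
  using scalar_CA[OF i, of "\<lambda>p q r. L p q r $$ (u,v)"] u v
  by (simp add: mlc_index sum_pair)

lemma mlc_CA_mat:
  assumes i: "i < d"
  shows "mlc PP (\<lambda>(p,q). delta H i p q) (\<lambda>(p,q). mlc PP (\<lambda>(p',q'). delta H p p' q') (\<lambda>(p',q'). L p' q' q) a b) a b =
         mlc PP (\<lambda>(p,q). delta H i p q) (\<lambda>(p,q). mlc PP (\<lambda>(q',q''). delta H q q' q'') (\<lambda>(q',q''). L p q' q'') a b) a b"
  by (rule eq_matI) (simp_all add: mlc_CA[OF i])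

lemma mod_carrier: "is_mod H M \<Longrightarrow> i < d \<Longrightarrow> snd M i \<in> carrier_mat (fst M) (fst M)"
  by (simp add: is_mod_def Let_def)
lemma mod_mult: "is_mod H M \<Longrightarrow> i < d \<Longrightarrow> j < d \<Longrightarrow> snd M i * snd M j = mlc D (mu H i j) (snd M) (fst M) (fst M)"
  by (simp add: is_mod_def Let_def lc_mlc)
lemma mod_unit: "is_mod H M \<Longrightarrow> mlc D (eta H) (snd M) (fst M) (fst M) = 1\<^sub>m (fst M)"
  by (simp add: is_mod_def Let_def lc_mlc)

definition Rm :: "'k amod \<Rightarrow> nat \<Rightarrow> 'k mat" where
  "Rm M l = mlc D (antip H l) (snd M) (fst M) (fst M)"

lemma Rm_carrier[simp]: "Rm M l \<in> carrier_mat (fst M) (fst M)"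
  by (simp add: Rm_def)

lemma antipode_mod_L:
  assumes M: "is_mod H M" and l: "l < d"
  shows "mlc PP (\<lambda>(i,j). delta H l i j) (\<lambda>(i,j). Rm M i * snd M j) (fst M) (fst M) = eps H l \<cdot>\<^sub>m 1\<^sub>m (fst M)"
proof -
  let ?m = "fst M" and ?\<rho> = "snd M"
  have "mlc PP (\<lambda>(i,j). delta H l i j) (\<lambda>(i,j). Rm M i * ?\<rho> j) ?m ?m =
        mlc PP (\<lambda>(i,j). delta H l i j) (\<lambda>x. mlc D (\<lambda>q. \<Sum>p\<in>D. antip H (fst x) p * mu H p (snd x) q) ?\<rho> ?m ?m) ?m ?m"
  proof (rule mlc_eqI2)
    fix x assume x: "x \<in> PP"
    obtain i j where ij: "x = (i,j)" "i < d" "j < d" using x by auto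
    have "Rm M i * ?\<rho> j = mlc D (antip H i) (\<lambda>p. ?\<rho> p * ?\<rho> j) ?m ?m"
      unfolding Rm_def by (rule mlc_mult_right) (use mod_carrier[OF M] ij in auto)
    also have "\<dots> = mlc D (antip H i) (\<lambda>p. mlc D (mu H p j) ?\<rho> ?m ?m) ?m ?m"
      by (rule mlc_eqI2) (use mod_mult[OF M] ij in auto)
    also have "\<dots> = mlc D (\<lambda>q. \<Sum>p\<in>D. antip H i p * mu H p j q) ?\<rho> ?m ?m"
      by (rule mlc_collapse) auto
    finally show "(case x of (i,j) \<Rightarrow> Rm M i * ?\<rho> j) = mlc D (\<lambda>q. \<Sum>p\<in>D. antip H (fst x) p * mu H p (snd x) q) ?\<rho> ?m ?m"
      using ij by simp
  qed
  also have "\<dots> = mlc D (\<lambda>q. \<Sum>x\<in>PP. (case x of (i,j) \<Rightarrow> delta H l i j) * (\<Sum>p\<in>D. antip H (fst x) p * mu H p (snd x) q)) ?\<rho> ?m ?m"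
    by (rule mlc_collapse) auto
  also have "\<dots> = mlc D (\<lambda>q. eps H l * eta H q) ?\<rho> ?m ?m"
  proof (rule mlc_coeff_cong)
    fix q assume q: "q \<in> D"
    have "(\<Sum>x\<in>PP. (case x of (i,j) \<Rightarrow> delta H l i j) * (\<Sum>p\<in>D. antip H (fst x) p * mu H p (snd x) q)) =
          (\<Sum>i<d. \<Sum>j<d. \<Sum>p<d. delta H l i j * antip H i p * mu H p j q)"
      by (simp add: sum_pair sum_distrib_left mult.assoc)
    also have "\<dots> = eps H l * eta H q" using ax_antL[OF l] q by simp
    finally show "(\<Sum>x\<in>PP. (case x of (i,j) \<Rightarrow> delta H l i j) * (\<Sum>p\<in>D. antip H (fst x) p * mu H p (snd x) q)) = eps H l * eta H q" .
  qed
  also have "\<dots> = eps H l \<cdot>\<^sub>m 1\<^sub>m ?m"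
    using mod_unit[OF M] by (simp add: mlc_smult_in)
  finally show ?thesis .
qed

lemma antipode_mod_R:
  assumes M: "is_mod H M" and l: "l < d"
  shows "mlc PP (\<lambda>(i,j). delta H l i j) (\<lambda>(i,j). snd M i * Rm M j) (fst M) (fst M) = eps H l \<cdot>\<^sub>m 1\<^sub>m (fst M)"
proof -
  let ?m = "fst M" and ?\<rho> = "snd M"
  have "mlc PP (\<lambda>(i,j). delta H l i j) (\<lambda>(i,j). ?\<rho> i * Rm M j) ?m ?m =
        mlc PP (\<lambda>(i,j). delta H l i j) (\<lambda>x. mlc D (\<lambda>q. \<Sum>p\<in>D. antip H (snd x) p * mu H (fst x) p q) ?\<rho> ?m ?m) ?m ?m"
  proof (rule mlc_eqI2)
    fix x assume x: "x \<in> PP"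
    obtain i j where ij: "x = (i,j)" "i < d" "j < d" using x by auto
    have "?\<rho> i * Rm M j = mlc D (antip H j) (\<lambda>p. ?\<rho> i * ?\<rho> p) ?m ?m"
      unfolding Rm_def by (rule mlc_mult_left) (use mod_carrier[OF M] ij in auto)
    also have "\<dots> = mlc D (antip H j) (\<lambda>p. mlc D (mu H i p) ?\<rho> ?m ?m) ?m ?m"
      by (rule mlc_eqI2) (use mod_mult[OF M] ij in auto)
    also have "\<dots> = mlc D (\<lambda>q. \<Sum>p\<in>D. antip H j p * mu H i p q) ?\<rho> ?m ?m"
      by (rule mlc_collapse) auto
    finally show "(case x of (i,j) \<Rightarrow> ?\<rho> i * Rm M j) = mlc D (\<lambda>q. \<Sum>p\<in>D. antip H (snd x) p * mu H (fst x) p q) ?\<rho> ?m ?m"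
      using ij by simp
  qed
  also have "\<dots> = mlc D (\<lambda>q. \<Sum>x\<in>PP. (case x of (i,j) \<Rightarrow> delta H l i j) * (\<Sum>p\<in>D. antip H (snd x) p * mu H (fst x) p q)) ?\<rho> ?m ?m"
    by (rule mlc_collapse) auto
  also have "\<dots> = mlc D (\<lambda>q. eps H l * eta H q) ?\<rho> ?m ?m"
  proof (rule mlc_coeff_cong)
    fix q assume q: "q \<in> D"
    have "(\<Sum>x\<in>PP. (case x of (i,j) \<Rightarrow> delta H l i j) * (\<Sum>p\<in>D. antip H (snd x) p * mu H (fst x) p q)) =
          (\<Sum>i<d. \<Sum>j<d. \<Sum>p<d. delta H l i j * antip H j p * mu H i p q)"
      by (simp add: sum_pair sum_distrib_left mult.assoc)
    also have "\<dots> = eps H l * eta H q" using ax_antR[OF l] q by simp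
    finally show "(\<Sum>x\<in>PP. (case x of (i,j) \<Rightarrow> delta H l i j) * (\<Sum>p\<in>D. antip H (snd x) p * mu H (fst x) p q)) = eps H l * eta H q" .
  qed
  also have "\<dots> = eps H l \<cdot>\<^sub>m 1\<^sub>m ?m"
    using mod_unit[OF M] by (simp add: mlc_smult_in)
  finally show ?thesis .
qed

definition conv :: "nat \<Rightarrow> (nat \<Rightarrow> nat \<Rightarrow> 'k mat) \<Rightarrow> (nat \<Rightarrow> nat \<Rightarrow> 'k mat) \<Rightarrow> nat \<Rightarrow> nat \<Rightarrow> 'k mat" where
  "conv m X Y i j = mlc PP (\<lambda>(p,q). delta H i p q) (\<lambda>(p,q). mlc PP (\<lambda>(r,s). delta H j r s) (\<lambda>(r,s). X p r * Y q s) m m) m m"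

definition fam :: "nat \<Rightarrow> (nat \<Rightarrow> nat \<Rightarrow> 'k mat) \<Rightarrow> bool" where
  "fam m X \<longleftrightarrow> (\<forall>p<d. \<forall>r<d. X p r \<in> carrier_mat m m)"

lemma famD: "fam m X \<Longrightarrow> p < d \<Longrightarrow> r < d \<Longrightarrow> X p r \<in> carrier_mat m m"
  by (simp add: fam_def)

lemma fam_conv: "fam m (conv m X Y)"
  by (simp add: fam_def conv_def)

lemma conv_mult_right:
  assumes X: "fam m X" and Y: "fam m Y" and Z: "Z \<in> carrier_mat m m" and p: "p < d" and r: "r < d"
  shows "conv m X Y p r * Z = mlc PP (\<lambda>(p',q'). delta H p p' q') (\<lambda>(p',q'). mlc PP (\<lambda>(r',s'). delta H r r' s') (\<lambda>(r',s'). X p' r' * (Y q' s' * Z)) m m) m m"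
proof -
  have "conv m X Y p r * Z = mlc PP (\<lambda>(p',q'). delta H p p' q') (\<lambda>x. (case x of (p',q') \<Rightarrow> mlc PP (\<lambda>(r',s'). delta H r r' s') (\<lambda>(r',s'). X p' r' * Y q' s') m m) * Z) m m"
    unfolding conv_def by (rule mlc_mult_right) (use Z in auto)
  also have "\<dots> = mlc PP (\<lambda>(p',q'). delta H p p' q') (\<lambda>(p',q'). mlc PP (\<lambda>(r',s'). delta H r r' s') (\<lambda>(r',s'). X p' r' * (Y q' s' * Z)) m m) m m"
  proof (rule mlc_eqI2)
    fix x assume x: "x \<in> PP"
    obtain p' q' where pq: "x = (p',q')" "p' < d" "q' < d" using x by auto
    have "mlc PP (\<lambda>(r',s'). delta H r r' s') (\<lambda>(r',s'). X p' r' * Y q' s') m m * Z =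
          mlc PP (\<lambda>(r',s'). delta H r r' s') (\<lambda>y. (case y of (r',s') \<Rightarrow> X p' r' * Y q' s') * Z) m m"
      by (rule mlc_mult_right) (use Z famD[OF X] famD[OF Y] pq in \<open>auto intro!: mult_carrier_mat\<close>)
    also have "\<dots> = mlc PP (\<lambda>(r',s'). delta H r r' s') (\<lambda>(r',s'). X p' r' * (Y q' s' * Z)) m m"
    proof (rule mlc_eqI2)
      fix y assume y: "y \<in> PP"
      obtain r' s' where rs: "y = (r',s')" "r' < d" "s' < d" using y by auto
      show "(case y of (r',s') \<Rightarrow> X p' r' * Y q' s') * Z = (case y of (r',s') \<Rightarrow> X p' r' * (Y q' s' * Z))"
        using assoc_mult_mat[OF famD[OF X pq(2) rs(2)] famD[OF Y pq(3) rs(3)] Z] rs by simp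
    qed
    finally show "(case x of (p',q') \<Rightarrow> mlc PP (\<lambda>(r',s'). delta H r r' s') (\<lambda>(r',s'). X p' r' * Y q' s') m m) * Z =
       (case x of (p',q') \<Rightarrow> mlc PP (\<lambda>(r',s'). delta H r r' s') (\<lambda>(r',s'). X p' r' * (Y q' s' * Z)) m m)"
      using pq by simp
  qed
  finally show ?thesis .
qed

lemma conv_mult_left:
  assumes X: "fam m Y" and Y: "fam m Z" and Z: "A \<in> carrier_mat m m" and p: "q < d" and r: "s < d"
  shows "A * conv m Y Z q s = mlc PP (\<lambda>(q',q''). delta H q q' q'') (\<lambda>(q',q''). mlc PP (\<lambda>(s',s''). delta H s s' s'') (\<lambda>(s',s''). A * (Y q' s' * Z q'' s'')) m m) m m"
proof -
  have "A * conv m Y Z q s = mlc PP (\<lambda>(q',q''). delta H q q' q'') (\<lambda>x. A * (case x of (q',q'') \<Rightarrow> mlc PP (\<lambda>(s',s''). delta H s s' s'') (\<lambda>(s',s''). Y q' s' * Z q'' s'') m m)) m m"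
    unfolding conv_def by (rule mlc_mult_left) (use Z in auto)
  also have "\<dots> = mlc PP (\<lambda>(q',q''). delta H q q' q'') (\<lambda>(q',q''). mlc PP (\<lambda>(s',s''). delta H s s' s'') (\<lambda>(s',s''). A * (Y q' s' * Z q'' s'')) m m) m m"
  proof (rule mlc_eqI2)
    fix x assume x: "x \<in> PP"
    obtain q' q'' where pq: "x = (q',q'')" "q' < d" "q'' < d" using x by auto
    have "A * mlc PP (\<lambda>(s',s''). delta H s s' s'') (\<lambda>(s',s''). Y q' s' * Z q'' s'') m m =
          mlc PP (\<lambda>(s',s''). delta H s s' s'') (\<lambda>y. A * (case y of (s',s'') \<Rightarrow> Y q' s' * Z q'' s'')) m m"
      by (rule mlc_mult_left) (use Z famD[OF X] famD[OF Y] pq in \<open>auto intro!: mult_carrier_mat\<close>)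
    also have "\<dots> = mlc PP (\<lambda>(s',s''). delta H s s' s'') (\<lambda>(s',s''). A * (Y q' s' * Z q'' s'')) m m"
      by (rule mlc_eqI2) auto
    finally show "A * (case x of (q',q'') \<Rightarrow> mlc PP (\<lambda>(s',s''). delta H s s' s'') (\<lambda>(s',s''). Y q' s' * Z q'' s'') m m) =
       (case x of (q',q'') \<Rightarrow> mlc PP (\<lambda>(s',s''). delta H s s' s'') (\<lambda>(s',s''). A * (Y q' s' * Z q'' s'')) m m)"
      using pq by simp
  qed
  finally show ?thesis .
qed

lemma mlc_swap2:
  assumes "finite A" "finite B"
  shows "mlc A c (\<lambda>(r,s). mlc B e (\<lambda>(p,q). K r s p q) a b) a b = mlc B e (\<lambda>(p,q). mlc A c (\<lambda>(r,s). K r s p q) a b) a b"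
proof (rule eq_matI)
  fix u v assume "u < dim_row (mlc B e (\<lambda>(p,q). mlc A c (\<lambda>(r,s). K r s p q) a b) a b)"
    "v < dim_col (mlc B e (\<lambda>(p,q). mlc A c (\<lambda>(r,s). K r s p q) a b) a b)"
  then have uv: "u < a" "v < b" by auto
  have "mlc A c (\<lambda>(r,s). mlc B e (\<lambda>(p,q). K r s p q) a b) a b $$ (u,v) =
        (\<Sum>x\<in>A. \<Sum>y\<in>B. c x * e y * (case x of (r,s) \<Rightarrow> case y of (p,q) \<Rightarrow> K r s p q) $$ (u,v))"
    using uv by (simp add: mlc_index sum_distrib_left mult.assoc split_def)
  also have "\<dots> = (\<Sum>y\<in>B. \<Sum>x\<in>A. c x * e y * (case x of (r,s) \<Rightarrow> case y of (p,q) \<Rightarrow> K r s p q) $$ (u,v))"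
    by (rule sum.swap)
  also have "\<dots> = mlc B e (\<lambda>(p,q). mlc A c (\<lambda>(r,s). K r s p q) a b) a b $$ (u,v)"
    using uv by (simp add: mlc_index sum_distrib_left mult.assoc mult.left_commute split_def)
  finally show "mlc A c (\<lambda>(r,s). mlc B e (\<lambda>(p,q). K r s p q) a b) a b $$ (u,v) = mlc B e (\<lambda>(p,q). mlc A c (\<lambda>(r,s). K r s p q) a b) a b $$ (u,v)" .
qed auto

lemma conv_assoc:
  assumes X: "fam m X" and Y: "fam m Y" and Z: "fam m Z" and i: "i < d" and j: "j < d"
  shows "conv m (conv m X Y) Z i j = conv m X (conv m Y Z) i j"
proof -
  have "conv m (conv m X Y) Z i j = mlc PP (\<lambda>(p,q). delta H i p q) (\<lambda>(p,q). mlc PP (\<lambda>(r,s). delta H j r s)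
     (\<lambda>(r,s). mlc PP (\<lambda>(p',q'). delta H p p' q') (\<lambda>(p',q'). mlc PP (\<lambda>(r',s'). delta H r r' s') (\<lambda>(r',s'). X p' r' * (Y q' s' * Z q s)) m m) m m) m m) m m"
    unfolding conv_def[of m "conv m X Y"]
  proof (rule mlc_eqI2)
    fix x assume x: "x \<in> PP"
    obtain p q where pq: "x = (p,q)" "p < d" "q < d" using x by auto
    have "mlc PP (\<lambda>(r,s). delta H j r s) (\<lambda>(r,s). conv m X Y p r * Z q s) m m =
       mlc PP (\<lambda>(r,s). delta H j r s) (\<lambda>(r,s). mlc PP (\<lambda>(p',q'). delta H p p' q') (\<lambda>(p',q'). mlc PP (\<lambda>(r',s'). delta H r r' s') (\<lambda>(r',s'). X p' r' * (Y q' s' * Z q s)) m m) m m) m m"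
    proof (rule mlc_eqI2)
      fix y assume y: "y \<in> PP"
      obtain r s where rs: "y = (r,s)" "r < d" "s < d" using y by auto
      show "(case y of (r,s) \<Rightarrow> conv m X Y p r * Z q s) = (case y of (r,s) \<Rightarrow> mlc PP (\<lambda>(p',q'). delta H p p' q') (\<lambda>(p',q'). mlc PP (\<lambda>(r',s'). delta H r r' s') (\<lambda>(r',s'). X p' r' * (Y q' s' * Z q s)) m m) m m)"
        using conv_mult_right[OF X Y famD[OF Z pq(3) rs(3)] pq(2) rs(2)] rs by simp
    qed
    then show "(case x of (p,q) \<Rightarrow> mlc PP (\<lambda>(r,s). delta H j r s) (\<lambda>(r,s). conv m X Y p r * Z q s) m m) =
      (case x of (p,q) \<Rightarrow> mlc PP (\<lambda>(r,s). delta H j r s) (\<lambda>(r,s). mlc PP (\<lambda>(p',q'). delta H p p' q') (\<lambda>(p',q'). mlc PP (\<lambda>(r',s'). delta H r r' s') (\<lambda>(r',s'). X p' r' * (Y q' s' * Z q s)) m m) m m) m m)"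
      using pq by simp
  qed
  also have "\<dots> = mlc PP (\<lambda>(p,q). delta H i p q) (\<lambda>(p,q). mlc PP (\<lambda>(p',q'). delta H p p' q')
     (\<lambda>(p',q'). mlc PP (\<lambda>(r,s). delta H j r s) (\<lambda>(r,s). mlc PP (\<lambda>(r',s'). delta H r r' s') (\<lambda>(r',s'). X p' r' * (Y q' s' * Z q s)) m m) m m) m m) m m"
    by (rule mlc_eqI2) (auto intro!: mlc_swap2)
  also have "\<dots> = mlc PP (\<lambda>(p,q). delta H i p q) (\<lambda>(p,q). mlc PP (\<lambda>(q',q''). delta H q q' q'')
     (\<lambda>(q',q''). mlc PP (\<lambda>(r,s). delta H j r s) (\<lambda>(r,s). mlc PP (\<lambda>(r',s'). delta H r r' s') (\<lambda>(r',s'). X p r' * (Y q' s' * Z q'' s)) m m) m m) m m) m m"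
    by (rule mlc_CA_mat[OF i, where L = "\<lambda>p' q' q. mlc PP (\<lambda>(r,s). delta H j r s) (\<lambda>(r,s). mlc PP (\<lambda>(r',s'). delta H r r' s') (\<lambda>(r',s'). X p' r' * (Y q' s' * Z q s)) m m) m m"])
  also have "\<dots> = mlc PP (\<lambda>(p,q). delta H i p q) (\<lambda>(p,q). mlc PP (\<lambda>(q',q''). delta H q q' q'')
     (\<lambda>(q',q''). mlc PP (\<lambda>(r,s). delta H j r s) (\<lambda>(r,s). mlc PP (\<lambda>(s',s''). delta H s s' s'') (\<lambda>(s',s''). X p r * (Y q' s' * Z q'' s'')) m m) m m) m m) m m"
  proof (rule mlc_eqI2)
    fix x assume x: "x \<in> PP"
    obtain p q where pq: "x = (p,q)" using x by auto
    show "(case x of (p,q) \<Rightarrow> mlc PP (\<lambda>(q',q''). delta H q q' q'')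
     (\<lambda>(q',q''). mlc PP (\<lambda>(r,s). delta H j r s) (\<lambda>(r,s). mlc PP (\<lambda>(r',s'). delta H r r' s') (\<lambda>(r',s'). X p r' * (Y q' s' * Z q'' s)) m m) m m) m m) =
      (case x of (p,q) \<Rightarrow> mlc PP (\<lambda>(q',q''). delta H q q' q'')
     (\<lambda>(q',q''). mlc PP (\<lambda>(r,s). delta H j r s) (\<lambda>(r,s). mlc PP (\<lambda>(s',s''). delta H s s' s'') (\<lambda>(s',s''). X p r * (Y q' s' * Z q'' s'')) m m) m m) m m)"
      unfolding pq case_prod_conv
    proof (rule mlc_eqI2)
      fix y assume y: "y \<in> PP"
      obtain q' q'' where qq: "y = (q',q'')" using y by auto
      show "(case y of (q',q'') \<Rightarrow> mlc PP (\<lambda>(r,s). delta H j r s) (\<lambda>(r,s). mlc PP (\<lambda>(r',s'). delta H r r' s') (\<lambda>(r',s'). X p r' * (Y q' s' * Z q'' s)) m m) m m) =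
        (case y of (q',q'') \<Rightarrow> mlc PP (\<lambda>(r,s). delta H j r s) (\<lambda>(r,s). mlc PP (\<lambda>(s',s''). delta H s s' s'') (\<lambda>(s',s''). X p r * (Y q' s' * Z q'' s'')) m m) m m)"
        unfolding qq case_prod_conv
        by (rule mlc_CA_mat[OF j, where L = "\<lambda>r' s' s. X p r' * (Y q' s' * Z q'' s)"])
    qed
  qed
  also have "\<dots> = mlc PP (\<lambda>(p,q). delta H i p q) (\<lambda>(p,q). mlc PP (\<lambda>(r,s). delta H j r s)
     (\<lambda>(r,s). mlc PP (\<lambda>(q',q''). delta H q q' q'') (\<lambda>(q',q''). mlc PP (\<lambda>(s',s''). delta H s s' s'') (\<lambda>(s',s''). X p r * (Y q' s' * Z q'' s'')) m m) m m) m m) m m"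
    by (rule mlc_eqI2) (auto intro!: mlc_swap2)
  also have "\<dots> = conv m X (conv m Y Z) i j"
    unfolding conv_def[of m X]
  proof (rule mlc_eqI2)
    fix x assume x: "x \<in> PP"
    obtain p q where pq: "x = (p,q)" "p < d" "q < d" using x by auto
    have "mlc PP (\<lambda>(r,s). delta H j r s) (\<lambda>(r,s). X p r * conv m Y Z q s) m m =
       mlc PP (\<lambda>(r,s). delta H j r s) (\<lambda>(r,s). mlc PP (\<lambda>(q',q''). delta H q q' q'') (\<lambda>(q',q''). mlc PP (\<lambda>(s',s''). delta H s s' s'') (\<lambda>(s',s''). X p r * (Y q' s' * Z q'' s'')) m m) m m) m m"
    proof (rule mlc_eqI2)
      fix y assume y: "y \<in> PP"
      obtain r s where rs: "y = (r,s)" "r < d" "s < d" using y by auto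
      show "(case y of (r,s) \<Rightarrow> X p r * conv m Y Z q s) = (case y of (r,s) \<Rightarrow> mlc PP (\<lambda>(q',q''). delta H q q' q'') (\<lambda>(q',q''). mlc PP (\<lambda>(s',s''). delta H s s' s'') (\<lambda>(s',s''). X p r * (Y q' s' * Z q'' s'')) m m) m m)"
        using conv_mult_left[OF Y Z famD[OF X pq(2) rs(2)] pq(3) rs(3)] rs by simp
    qed
    then show "(case x of (p,q) \<Rightarrow> mlc PP (\<lambda>(r,s). delta H j r s) (\<lambda>(r,s). mlc PP (\<lambda>(q',q''). delta H q q' q'') (\<lambda>(q',q''). mlc PP (\<lambda>(s',s''). delta H s s' s'') (\<lambda>(s',s''). X p r * (Y q' s' * Z q'' s'')) m m) m m) m m) =
      (case x of (p,q) \<Rightarrow> mlc PP (\<lambda>(r,s). delta H j r s) (\<lambda>(r,s). X p r * conv m Y Z q s) m m)"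
      using pq by simp
  qed
  finally show ?thesis .
qed

lemma counit_app1: "i < d \<Longrightarrow> (\<Sum>p<d. \<Sum>q<d. delta H i p q * (eps H q * f p)) = f i"
proof -
  assume i: "i < d"
  have "(\<Sum>p<d. \<Sum>q<d. delta H i p q * (eps H q * f p)) = (\<Sum>p<d. (\<Sum>q<d. eps H q * delta H i p q) * f p)"
    by (simp add: sum_distrib_right sum_distrib_left ac_simps)
  also have "\<dots> = (\<Sum>p<d. kd i p * f p)"
    by (rule sum.cong) (simp_all add: ax_counitR i)
  finally show ?thesis using i by simp
qed

lemma counit_app2: "i < d \<Longrightarrow> (\<Sum>p<d. \<Sum>q<d. delta H i p q * (eps H p * f q)) = f i"
proof -
  assume i: "i < d"
  have "(\<Sum>p<d. \<Sum>q<d. delta H i p q * (eps H p * f q)) = (\<Sum>q<d. \<Sum>p<d. delta H i p q * (eps H p * f q))"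
    by (rule sum.swap)
  also have "\<dots> = (\<Sum>q<d. (\<Sum>p<d. eps H p * delta H i p q) * f q)"
    by (simp add: sum_distrib_right sum_distrib_left ac_simps)
  also have "\<dots> = (\<Sum>q<d. kd i q * f q)"
    by (rule sum.cong) (simp_all add: ax_counitL i)
  finally show ?thesis using i by simp
qed

definition U :: "nat \<Rightarrow> nat \<Rightarrow> nat \<Rightarrow> 'k mat" where
  "U m a b = (eps H a * eps H b) \<cdot>\<^sub>m 1\<^sub>m m"

lemma fam_U: "fam m (U m)" by (simp add: fam_def U_def)

lemma conv_unitR:
  assumes X: "fam m X" and i: "i < d" and j: "j < d"
  shows "conv m X (U m) i j = X i j"
proof (rule eq_matI)
  fix u v assume "u < dim_row (X i j)" "v < dim_col (X i j)"
  then have uv: "u < m" "v < m" using famD[OF X i j] by auto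
  have "conv m X (U m) i j $$ (u,v) = (\<Sum>p<d. \<Sum>q<d. delta H i p q * (\<Sum>r<d. \<Sum>s<d. delta H j r s * (X p r * U m q s) $$ (u,v)))"
    using uv by (simp add: conv_def mlc_index sum_pair)
  also have "\<dots> = (\<Sum>p<d. \<Sum>q<d. delta H i p q * (eps H q * (\<Sum>r<d. \<Sum>s<d. delta H j r s * (eps H s * X p r $$ (u,v)))))"
  proof (intro sum.cong refl)
    fix p q assume pq: "p \<in> D" "q \<in> D"
    have "(\<Sum>r<d. \<Sum>s<d. delta H j r s * (X p r * U m q s) $$ (u,v)) = (\<Sum>r<d. \<Sum>s<d. delta H j r s * (eps H q * (eps H s * X p r $$ (u,v))))"
    proof (intro sum.cong refl)
      fix r s assume rs: "r \<in> D" "s \<in> D"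
      have "X p r * U m q s = (eps H q * eps H s) \<cdot>\<^sub>m X p r"
        using famD[OF X, of p r] pq rs by (simp add: U_def mult_smult_distrib[of _ m m _ m])
      then show "delta H j r s * (X p r * U m q s) $$ (u,v) = delta H j r s * (eps H q * (eps H s * X p r $$ (u,v)))"
        using famD[OF X, of p r] pq rs uv by simp
    qed
    then show "delta H i p q * (\<Sum>r<d. \<Sum>s<d. delta H j r s * (X p r * U m q s) $$ (u,v)) =
      delta H i p q * (eps H q * (\<Sum>r<d. \<Sum>s<d. delta H j r s * (eps H s * X p r $$ (u,v))))"
      by (simp add: sum_distrib_left ac_simps)
  qed
  also have "\<dots> = X i j $$ (u,v)"
    using counit_app1[OF i] counit_app1[OF j] by simp
  finally show "conv m X (U m) i j $$ (u,v) = X i j $$ (u,v)" .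
qed (use famD[OF X i j] in \<open>auto simp: conv_def\<close>)

lemma conv_unitL:
  assumes X: "fam m X" and i: "i < d" and j: "j < d"
  shows "conv m (U m) X i j = X i j"
proof (rule eq_matI)
  fix u v assume "u < dim_row (X i j)" "v < dim_col (X i j)"
  then have uv: "u < m" "v < m" using famD[OF X i j] by auto
  have "conv m (U m) X i j $$ (u,v) = (\<Sum>p<d. \<Sum>q<d. delta H i p q * (\<Sum>r<d. \<Sum>s<d. delta H j r s * (U m p r * X q s) $$ (u,v)))"
    using uv by (simp add: conv_def mlc_index sum_pair)
  also have "\<dots> = (\<Sum>p<d. \<Sum>q<d. delta H i p q * (eps H p * (\<Sum>r<d. \<Sum>s<d. delta H j r s * (eps H r * X q s $$ (u,v)))))"
  proof (intro sum.cong refl)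
    fix p q assume pq: "p \<in> D" "q \<in> D"
    have "(\<Sum>r<d. \<Sum>s<d. delta H j r s * (U m p r * X q s) $$ (u,v)) = (\<Sum>r<d. \<Sum>s<d. delta H j r s * (eps H p * (eps H r * X q s $$ (u,v))))"
    proof (intro sum.cong refl)
      fix r s assume rs: "r \<in> D" "s \<in> D"
      have "U m p r * X q s = (eps H p * eps H r) \<cdot>\<^sub>m X q s"
        using famD[OF X, of q s] pq rs by (simp add: U_def mult_smult_assoc_mat[of _ m m _ m])
      then show "delta H j r s * (U m p r * X q s) $$ (u,v) = delta H j r s * (eps H p * (eps H r * X q s $$ (u,v)))"
        using famD[OF X, of q s] pq rs uv by simp
    qed
    then show "delta H i p q * (\<Sum>r<d. \<Sum>s<d. delta H j r s * (U m p r * X q s) $$ (u,v)) =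
      delta H i p q * (eps H p * (\<Sum>r<d. \<Sum>s<d. delta H j r s * (eps H r * X q s $$ (u,v))))"
      by (simp add: sum_distrib_left ac_simps)
  qed
  also have "\<dots> = X i j $$ (u,v)"
    using counit_app2[OF i] counit_app2[OF j] by simp
  finally show "conv m (U m) X i j $$ (u,v) = X i j $$ (u,v)" .
qed (use famD[OF X i j] in \<open>auto simp: conv_def\<close>)

lemma conv_cong:
  assumes "\<And>p r. p < d \<Longrightarrow> r < d \<Longrightarrow> X p r = X' p r" "\<And>p r. p < d \<Longrightarrow> r < d \<Longrightarrow> Y p r = Y' p r"
  shows "conv m X Y i j = conv m X' Y' i j"
  unfolding conv_def
  by (intro mlc_eqI2) (auto simp: assms intro!: mlc_eqI2)

end

lemma mlc_const:
  assumes "A \<in> carrier_mat a b"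
  shows "mlc X c (\<lambda>x. k x \<cdot>\<^sub>m A) a b = (\<Sum>x\<in>X. c x * k x) \<cdot>\<^sub>m A"
  by (rule eq_matI) (use assms in \<open>auto simp: mlc_index sum_distrib_right mult.assoc\<close>)

lemma smult_smult_mat: "a \<cdot>\<^sub>m (b \<cdot>\<^sub>m A) = (a * b :: 'a::comm_ring) \<cdot>\<^sub>m A"
  by (rule eq_matI) (auto simp: mult.assoc)

context hopf begin

lemma claim2:
  assumes M: "is_mod H M" and i: "i < d" and j: "j < d"
  shows "conv (fst M) (\<lambda>p r. snd M p * snd M r) (\<lambda>q s. Rm M s * Rm M q) i j = U (fst M) i j"
proof -
  let ?m = "fst M" and ?\<rho> = "snd M"
  have c: "\<And>p. p < d \<Longrightarrow> ?\<rho> p \<in> carrier_mat ?m ?m" using mod_carrier[OF M] by auto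
  have "conv ?m (\<lambda>p r. ?\<rho> p * ?\<rho> r) (\<lambda>q s. Rm M s * Rm M q) i j =
        mlc PP (\<lambda>(p,q). delta H i p q) (\<lambda>x. eps H j \<cdot>\<^sub>m (case x of (p,q) \<Rightarrow> ?\<rho> p * Rm M q)) ?m ?m"
    unfolding conv_def
  proof (rule mlc_eqI2)
    fix x assume x: "x \<in> PP"
    obtain p q where pq: "x = (p,q)" "p < d" "q < d" using x by auto
    have "mlc PP (\<lambda>(r,s). delta H j r s) (\<lambda>(r,s). ?\<rho> p * ?\<rho> r * (Rm M s * Rm M q)) ?m ?m =
          mlc PP (\<lambda>(r,s). delta H j r s) (\<lambda>y. ?\<rho> p * (case y of (r,s) \<Rightarrow> ?\<rho> r * Rm M s) * Rm M q) ?m ?m"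
    proof (rule mlc_eqI2)
      fix y assume y: "y \<in> PP"
      obtain r s where rs: "y = (r,s)" "r < d" "s < d" using y by auto
      have cp: "?\<rho> p \<in> carrier_mat ?m ?m" and cr: "?\<rho> r \<in> carrier_mat ?m ?m" using c pq rs by auto
      have "?\<rho> p * ?\<rho> r * (Rm M s * Rm M q) = ?\<rho> p * ?\<rho> r * Rm M s * Rm M q"
        by (rule assoc_mult_mat[symmetric, OF mult_carrier_mat[OF cp cr] Rm_carrier Rm_carrier])
      also have "?\<rho> p * ?\<rho> r * Rm M s = ?\<rho> p * (?\<rho> r * Rm M s)"
        by (rule assoc_mult_mat[OF cp cr Rm_carrier])
      finally have "?\<rho> p * ?\<rho> r * (Rm M s * Rm M q) = ?\<rho> p * (?\<rho> r * Rm M s) * Rm M q" .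
      then show "(case y of (r,s) \<Rightarrow> ?\<rho> p * ?\<rho> r * (Rm M s * Rm M q)) = ?\<rho> p * (case y of (r,s) \<Rightarrow> ?\<rho> r * Rm M s) * Rm M q"
        using rs by simp
    qed
    also have "\<dots> = mlc PP (\<lambda>(r,s). delta H j r s) (\<lambda>y. ?\<rho> p * (case y of (r,s) \<Rightarrow> ?\<rho> r * Rm M s)) ?m ?m * Rm M q"
      by (rule mlc_mult_right[symmetric]) (use c[OF pq(2)] c in \<open>auto intro!: mult_carrier_mat\<close>)
    also have "mlc PP (\<lambda>(r,s). delta H j r s) (\<lambda>y. ?\<rho> p * (case y of (r,s) \<Rightarrow> ?\<rho> r * Rm M s)) ?m ?m =
               ?\<rho> p * mlc PP (\<lambda>(r,s). delta H j r s) (\<lambda>(r,s). ?\<rho> r * Rm M s) ?m ?m"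
      by (rule mlc_mult_left[symmetric]) (use c[OF pq(2)] c in \<open>auto intro!: mult_carrier_mat\<close>)
    also have "mlc PP (\<lambda>(r,s). delta H j r s) (\<lambda>(r,s). ?\<rho> r * Rm M s) ?m ?m = eps H j \<cdot>\<^sub>m 1\<^sub>m ?m"
      by (rule antipode_mod_R[OF M j])
    finally have "mlc PP (\<lambda>(r,s). delta H j r s) (\<lambda>(r,s). ?\<rho> p * ?\<rho> r * (Rm M s * Rm M q)) ?m ?m =
        eps H j \<cdot>\<^sub>m (?\<rho> p * Rm M q)"
      using c[OF pq(2)] by (simp add: mult_smult_distrib[of _ ?m ?m _ ?m] mult_smult_assoc_mat[of _ ?m ?m _ ?m])
    then show "(case x of (p,q) \<Rightarrow> mlc PP (\<lambda>(r,s). delta H j r s) (\<lambda>(r,s). ?\<rho> p * ?\<rho> r * (Rm M s * Rm M q)) ?m ?m) =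
      eps H j \<cdot>\<^sub>m (case x of (p,q) \<Rightarrow> ?\<rho> p * Rm M q)"
      using pq by simp
  qed
  also have "\<dots> = eps H j \<cdot>\<^sub>m mlc PP (\<lambda>(p,q). delta H i p q) (\<lambda>(p,q). ?\<rho> p * Rm M q) ?m ?m"
    by (rule mlc_smult_out) (use c in \<open>auto intro!: mult_carrier_mat\<close>)
  also have "\<dots> = U ?m i j"
    using antipode_mod_R[OF M i] by (simp add: U_def smult_smult_mat mult.commute)
  finally show ?thesis .
qed

lemma claim1:
  assumes M: "is_mod H M" and i: "i < d" and j: "j < d"
  shows "conv (fst M) (\<lambda>p r. mlc D (mu H p r) (Rm M) (fst M) (fst M)) (\<lambda>q s. snd M q * snd M s) i j = U (fst M) i j"
proof -
  let ?m = "fst M" and ?\<rho> = "snd M"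
  let ?\<Phi> = "\<lambda>(l,b). Rm M l * ?\<rho> b"
  have c: "\<And>p. p < d \<Longrightarrow> ?\<rho> p \<in> carrier_mat ?m ?m" using mod_carrier[OF M] by auto
  have step: "mlc D (mu H p r) (Rm M) ?m ?m * (?\<rho> q * ?\<rho> s) = mlc PP (\<lambda>(l,b). mu H p r l * mu H q s b) ?\<Phi> ?m ?m"
    if pqrs: "p < d" "q < d" "r < d" "s < d" for p q r s
  proof -
    have "mlc D (mu H p r) (Rm M) ?m ?m * (?\<rho> q * ?\<rho> s) = mlc D (mu H p r) (Rm M) ?m ?m * mlc D (mu H q s) ?\<rho> ?m ?m"
      using mod_mult[OF M pqrs(2) pqrs(4)] by simp
    also have "\<dots> = mlc D (mu H p r) (\<lambda>l. Rm M l * mlc D (mu H q s) ?\<rho> ?m ?m) ?m ?m"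
      by (rule mlc_mult_right) auto
    also have "\<dots> = mlc D (mu H p r) (\<lambda>l. mlc D (mu H q s) (\<lambda>b. Rm M l * ?\<rho> b) ?m ?m) ?m ?m"
      by (rule mlc_eqI2, rule mlc_mult_left) (use c in auto)
    also have "\<dots> = mlc (D \<times> D) (\<lambda>(x,y). mu H p r x * mu H q s y) (\<lambda>(x,y). Rm M x * ?\<rho> y) ?m ?m"
      by (rule mlc_prod) auto
    finally show ?thesis by (simp add: case_prod_beta)
  qed
  have "conv ?m (\<lambda>p r. mlc D (mu H p r) (Rm M) ?m ?m) (\<lambda>q s. ?\<rho> q * ?\<rho> s) i j =
        mlc PP (\<lambda>(p,q). delta H i p q) (\<lambda>x. mlc PP (\<lambda>(r,s). delta H j r s)
          (\<lambda>y. mlc PP (\<lambda>(l,b). mu H (fst x) (fst y) l * mu H (snd x) (snd y) b) ?\<Phi> ?m ?m) ?m ?m) ?m ?m"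
    unfolding conv_def
  proof (rule mlc_eqI2)
    fix x assume x: "x \<in> PP"
    obtain p q where pq: "x = (p,q)" "p < d" "q < d" using x by auto
    show "(case x of (p,q) \<Rightarrow> mlc PP (\<lambda>(r,s). delta H j r s) (\<lambda>(r,s). mlc D (mu H p r) (Rm M) ?m ?m * (?\<rho> q * ?\<rho> s)) ?m ?m) =
       mlc PP (\<lambda>(r,s). delta H j r s) (\<lambda>y. mlc PP (\<lambda>(l,b). mu H (fst x) (fst y) l * mu H (snd x) (snd y) b) ?\<Phi> ?m ?m) ?m ?m"
      unfolding pq case_prod_conv
      by (rule mlc_eqI2) (use step pq in auto)
  qed
  also have "\<dots> = mlc PP (\<lambda>(p,q). delta H i p q) (\<lambda>x. mlc PP (\<lambda>z. \<Sum>y\<in>PP. (case y of (r,s) \<Rightarrow> delta H j r s) *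
          (case z of (l,b) \<Rightarrow> mu H (fst x) (fst y) l * mu H (snd x) (snd y) b)) ?\<Phi> ?m ?m) ?m ?m"
    by (rule mlc_eqI2, rule mlc_collapse) auto
  also have "\<dots> = mlc PP (\<lambda>z. \<Sum>x\<in>PP. (case x of (p,q) \<Rightarrow> delta H i p q) * (\<Sum>y\<in>PP. (case y of (r,s) \<Rightarrow> delta H j r s) *
          (case z of (l,b) \<Rightarrow> mu H (fst x) (fst y) l * mu H (snd x) (snd y) b))) ?\<Phi> ?m ?m"
    by (rule mlc_collapse) auto
  also have "\<dots> = mlc PP (\<lambda>z. \<Sum>c\<in>D. mu H i j c * (case z of (l,b) \<Rightarrow> delta H c l b)) ?\<Phi> ?m ?m"
  proof (rule mlc_coeff_cong)
    fix z assume z: "z \<in> PP"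
    obtain l b where lb: "z = (l,b)" "l < d" "b < d" using z by auto
    have "(\<Sum>x\<in>PP. (case x of (p,q) \<Rightarrow> delta H i p q) * (\<Sum>y\<in>PP. (case y of (r,s) \<Rightarrow> delta H j r s) *
          (case z of (l,b) \<Rightarrow> mu H (fst x) (fst y) l * mu H (snd x) (snd y) b))) =
          (\<Sum>p<d. \<Sum>q<d. \<Sum>r<d. \<Sum>s<d. delta H i p q * delta H j r s * mu H p r l * mu H q s b)"
      using lb by (simp add: sum_pair sum_distrib_left ac_simps)
    also have "\<dots> = (\<Sum>c<d. mu H i j c * delta H c l b)"
      using ax_dmult[OF i j lb(2) lb(3)] by simp
    finally show "(\<Sum>x\<in>PP. (case x of (p,q) \<Rightarrow> delta H i p q) * (\<Sum>y\<in>PP. (case y of (r,s) \<Rightarrow> delta H j r s) *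
          (case z of (l,b) \<Rightarrow> mu H (fst x) (fst y) l * mu H (snd x) (snd y) b))) =
          (\<Sum>c\<in>D. mu H i j c * (case z of (l,b) \<Rightarrow> delta H c l b))"
      using lb by simp
  qed
  also have "\<dots> = mlc D (mu H i j) (\<lambda>c. mlc PP (\<lambda>(l,b). delta H c l b) ?\<Phi> ?m ?m) ?m ?m"
    by (rule mlc_collapse[symmetric]) auto
  also have "\<dots> = mlc D (mu H i j) (\<lambda>c. eps H c \<cdot>\<^sub>m 1\<^sub>m ?m) ?m ?m"
    by (rule mlc_eqI2) (use antipode_mod_L[OF M] in \<open>auto simp: case_prod_beta\<close>)
  also have "\<dots> = (\<Sum>c\<in>D. mu H i j c * eps H c) \<cdot>\<^sub>m 1\<^sub>m ?m"
    by (rule mlc_const) auto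
  also have "\<dots> = U ?m i j"
    using ax_emult[OF i j] by (simp add: U_def)
  finally show ?thesis .
qed

lemma fam_mlcR: "fam (fst M) (\<lambda>p r. mlc D (mu H p r) (Rm M) (fst M) (fst M))"
  by (simp add: fam_def)

lemma S_antimult_mod:
  assumes M: "is_mod H M" and i: "i < d" and j: "j < d"
  shows "Rm M j * Rm M i = mlc D (mu H i j) (Rm M) (fst M) (fst M)"
proof -
  let ?m = "fst M"
  let ?F = "\<lambda>p r. mlc D (mu H p r) (Rm M) ?m ?m" and ?Mu = "\<lambda>p r. snd M p * snd M r" and ?G = "\<lambda>q s. Rm M s * Rm M q"
  have fF: "fam ?m ?F" by (rule fam_mlcR)
  have fMu: "fam ?m ?Mu" using mod_carrier[OF M] by (auto simp: fam_def intro!: mult_carrier_mat)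
  have fG: "fam ?m ?G" unfolding fam_def using mult_carrier_mat[OF Rm_carrier Rm_carrier] by blast
  have "?F i j = conv ?m ?F (U ?m) i j" by (rule conv_unitR[OF fF i j, symmetric])
  also have "\<dots> = conv ?m ?F (conv ?m ?Mu ?G) i j"
    by (rule conv_cong) (use claim2[OF M] in auto)
  also have "\<dots> = conv ?m (conv ?m ?F ?Mu) ?G i j"
    by (rule conv_assoc[OF fF fMu fG i j, symmetric])
  also have "\<dots> = conv ?m (U ?m) ?G i j"
    by (rule conv_cong) (use claim1[OF M] in auto)
  also have "\<dots> = ?G i j" by (rule conv_unitL[OF fG i j])
  finally show ?thesis by simp
qed

lemma S_unit: assumes q: "q < d" shows "(\<Sum>l<d. eta H l * antip H l q) = eta H q"
proof -
  have "eta H q = (\<Sum>l<d. eta H l * (eps H l * eta H q))"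
    using ax_eunit by (simp add: sum_distrib_right[symmetric] mult.assoc[symmetric])
  also have "\<dots> = (\<Sum>l<d. eta H l * (\<Sum>i<d. \<Sum>j<d. \<Sum>p<d. delta H l i j * antip H i p * mu H p j q))"
    using ax_antL q by simp
  also have "\<dots> = (\<Sum>l<d. \<Sum>i<d. \<Sum>j<d. \<Sum>p<d. eta H l * delta H l i j * (antip H i p * mu H p j q))"
    by (simp add: sum_distrib_left ac_simps)
  also have "\<dots> = (\<Sum>i<d. \<Sum>l<d. \<Sum>j<d. \<Sum>p<d. eta H l * delta H l i j * (antip H i p * mu H p j q))"
    by (rule sum.swap)
  also have "\<dots> = (\<Sum>i<d. \<Sum>j<d. \<Sum>l<d. \<Sum>p<d. eta H l * delta H l i j * (antip H i p * mu H p j q))"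
    by (rule sum.cong[OF refl sum.swap])
  also have "\<dots> = (\<Sum>i<d. \<Sum>j<d. \<Sum>l<d. eta H l * delta H l i j * (\<Sum>p<d. antip H i p * mu H p j q))"
    by (simp only: sum_distrib_left)
  also have "\<dots> = (\<Sum>i<d. \<Sum>j<d. (\<Sum>l<d. eta H l * delta H l i j) * (\<Sum>p<d. antip H i p * mu H p j q))"
    by (simp only: sum_distrib_right)
  also have "\<dots> = (\<Sum>i<d. \<Sum>j<d. eta H i * eta H j * (\<Sum>p<d. antip H i p * mu H p j q))"
    by (intro sum.cong refl) (simp add: ax_dunit)
  also have "\<dots> = (\<Sum>i<d. \<Sum>j<d. \<Sum>p<d. eta H i * antip H i p * (eta H j * mu H p j q))"
    by (simp add: sum_distrib_left ac_simps)
  also have "\<dots> = (\<Sum>i<d. \<Sum>p<d. \<Sum>j<d. eta H i * antip H i p * (eta H j * mu H p j q))"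
    by (rule sum.cong[OF refl sum.swap])
  also have "\<dots> = (\<Sum>i<d. \<Sum>p<d. eta H i * antip H i p * kd p q)"
    by (intro sum.cong refl) (simp add: sum_distrib_left[symmetric] ax_unitR q)
  also have "\<dots> = (\<Sum>i<d. \<Sum>p<d. kd p q * (eta H i * antip H i p))"
    by (simp add: ac_simps)
  also have "\<dots> = (\<Sum>l<d. eta H l * antip H l q)"
    using q by (simp only: kd_sum_right)
  finally show ?thesis by simp
qed

lemma dual_rep: "i < d \<Longrightarrow> snd (dual H M) i = transpose_mat (Rm M i)"
  by (simp add: dual_def Rm_def lc_mlc)

lemma dual_fst[simp]: "fst (dual H M) = fst M"
  by (simp add: dual_def)

lemma dual_is_mod:
  assumes M: "is_mod H M"
  shows "is_mod H (dual H M)"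
  unfolding is_mod_def Let_def
proof (intro conjI allI impI)
  let ?m = "fst M"
  fix i assume i: "i < d"
  show "snd (dual H M) i \<in> carrier_mat (fst (dual H M)) (fst (dual H M))"
    using i by (simp add: dual_rep)
next
  let ?m = "fst M"
  fix i j assume i: "i < d" and j: "j < d"
  have "snd (dual H M) i * snd (dual H M) j = transpose_mat (Rm M i) * transpose_mat (Rm M j)"
    using i j by (simp add: dual_rep)
  also have "\<dots> = transpose_mat (Rm M j * Rm M i)"
    by (rule transpose_mult[symmetric, of _ ?m ?m _ ?m]) auto
  also have "\<dots> = transpose_mat (mlc D (mu H i j) (Rm M) ?m ?m)"
    by (simp add: S_antimult_mod[OF M i j])
  also have "\<dots> = mlc D (mu H i j) (\<lambda>l. transpose_mat (Rm M l)) ?m ?m"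
    by (rule mlc_transpose) auto
  also have "\<dots> = lc d (fst (dual H M)) (mu H i j) (snd (dual H M))"
    unfolding lc_mlc dual_fst by (rule mlc_eqI2) (simp add: dual_rep)
  finally show "snd (dual H M) i * snd (dual H M) j = lc d (fst (dual H M)) (mu H i j) (snd (dual H M))" .
next
  let ?m = "fst M"
  have "lc d (fst (dual H M)) (eta H) (snd (dual H M)) = mlc D (eta H) (\<lambda>l. transpose_mat (Rm M l)) ?m ?m"
    unfolding lc_mlc dual_fst by (rule mlc_eqI2) (simp add: dual_rep)
  also have "\<dots> = transpose_mat (mlc D (eta H) (Rm M) ?m ?m)"
    by (rule mlc_transpose[symmetric]) auto
  also have "mlc D (eta H) (Rm M) ?m ?m = mlc D (\<lambda>q. \<Sum>l\<in>D. eta H l * antip H l q) (snd M) ?m ?m"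
    unfolding Rm_def by (rule mlc_collapse) auto
  also have "\<dots> = mlc D (eta H) (snd M) ?m ?m"
    by (rule mlc_coeff_cong) (simp add: S_unit)
  also have "\<dots> = 1\<^sub>m ?m" by (rule mod_unit[OF M])
  finally show "lc d (fst (dual H M)) (eta H) (snd (dual H M)) = 1\<^sub>m (fst (dual H M))" by simp
qed

end

lemma mat_assoc4:
  assumes "A \<in> carrier_mat n1 n2" "B \<in> carrier_mat n2 n3" "C \<in> carrier_mat n3 n4" "D \<in> carrier_mat n4 n5"
  shows "A * B * (C * D) = A * (B * C) * D"
proof -
  have "A * B * (C * D) = A * B * C * D"
    using assoc_mult_mat[OF mult_carrier_mat[OF assms(1,2)] assms(3,4)] by simp
  also have "A * B * C = A * (B * C)" using assoc_mult_mat[OF assms(1-3)] .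
  finally show ?thesis .
qed

definition same :: "'k::field hopf_data \<Rightarrow> 'k amod \<Rightarrow> 'k amod \<Rightarrow> bool" where
  "same H A B \<longleftrightarrow> fst A = fst B \<and> (\<forall>i<hdim H. snd A i = snd B i)"

lemma same_sym: "same H A B \<Longrightarrow> same H B A" by (simp add: same_def)
lemma same_trans: "same H A B \<Longrightarrow> same H B C \<Longrightarrow> same H A C" by (simp add: same_def)

lemma hom_same_left: "same H A A' \<Longrightarrow> hom H A B T = hom H A' B T"
  by (simp add: same_def hom_def)
lemma hom_same_right: "same H B B' \<Longrightarrow> hom H A B T = hom H A B' T"
  by (simp add: same_def hom_def)
lemma wf_same: "same H A B \<Longrightarrow> wfm H A = wfm H B"
  by (simp add: same_def wfm_def)
lemma is_mod_same: "same H A B \<Longrightarrow> is_mod H A = is_mod H B"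
proof -
  assume s: "same H A B"
  have "lc (hdim H) n c (snd A) = lc (hdim H) n c (snd B)" for n c
    using s unfolding lc_mlc by (intro mlc_eqI2) (auto simp: same_def)
  then show ?thesis using s by (simp add: is_mod_def same_def Let_def)
qed
lemma projective_same: "same H A B \<Longrightarrow> projective H A = projective H B"
  by (simp add: projective_def hom_same_left)

lemma hom_id: "wfm H A \<Longrightarrow> hom H A A (1\<^sub>m (fst A))"
  by (auto simp: hom_def dest: wfD)

lemma hom_comp:
  assumes "wfm H A" "wfm H B" "wfm H C" "hom H A B f" "hom H B C g"
  shows "hom H A C (g * f)"
  unfolding hom_def
proof (intro conjI allI impI)
  have f: "f \<in> carrier_mat (fst B) (fst A)" and g: "g \<in> carrier_mat (fst C) (fst B)"
    using assms by (auto simp: hom_def)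
  then show "g * f \<in> carrier_mat (fst C) (fst A)" by auto
  fix i assume i: "i < hdim H"
  have a: "snd A i \<in> carrier_mat (fst A) (fst A)" and b: "snd B i \<in> carrier_mat (fst B) (fst B)"
    and c: "snd C i \<in> carrier_mat (fst C) (fst C)" using assms i by (auto dest: wfD)
  have "g * f * snd A i = g * (f * snd A i)" using f g a by (simp add: assoc_mult_mat[of _ _ _ _ _ _ "fst A"])
  also have "\<dots> = g * (snd B i * f)" using assms(4) i by (simp add: hom_def)
  also have "\<dots> = g * snd B i * f" using f g b by (simp add: assoc_mult_mat[of _ _ _ _ _ _ "fst A"])
  also have "\<dots> = snd C i * g * f" using assms(5) i by (simp add: hom_def)
  also have "\<dots> = snd C i * (g * f)" using f g c by (simp add: assoc_mult_mat[of _ _ _ _ _ _ "fst A"])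
  finally show "g * f * snd A i = snd C i * (g * f)" .
qed

definition retract :: "'k::field hopf_data \<Rightarrow> 'k amod \<Rightarrow> 'k amod \<Rightarrow> bool" where
  "retract H A B \<longleftrightarrow> (\<exists>i p. hom H A B i \<and> hom H B A p \<and> p * i = 1\<^sub>m (fst A))"

lemma iso_retract: "iso H A B \<Longrightarrow> retract H A B"
  by (auto simp: iso_def retract_def)

lemma same_iso:
  assumes A: "wfm H A" and s: "same H A B" shows "iso H A B"
proof -
  have h: "hom H A A (1\<^sub>m (fst A))" by (rule hom_id[OF A])
  have h1: "hom H A B (1\<^sub>m (fst A))" using h hom_same_right[OF s] by simp
  have h2: "hom H B A (1\<^sub>m (fst A))" using h hom_same_left[OF s] by simp
  have e: "fst B = fst A" using s by (simp add: same_def)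
  show ?thesis unfolding iso_def
    by (rule exI[of _ "1\<^sub>m (fst A)"], rule exI[of _ "1\<^sub>m (fst A)"]) (simp add: h1 h2 e)
qed

lemma iso_sym: "iso H A B \<Longrightarrow> iso H B A"
  by (auto simp: iso_def)

lemma iso_trans:
  assumes "wfm H A" "wfm H B" "wfm H C" "iso H A B" "iso H B C"
  shows "iso H A C"
proof -
  obtain f f' where f: "hom H A B f" "hom H B A f'" "f * f' = 1\<^sub>m (fst B)" "f' * f = 1\<^sub>m (fst A)"
    using assms(4) by (auto simp: iso_def)
  obtain g g' where g: "hom H B C g" "hom H C B g'" "g * g' = 1\<^sub>m (fst C)" "g' * g = 1\<^sub>m (fst B)"
    using assms(5) by (auto simp: iso_def)
  have fc: "f \<in> carrier_mat (fst B) (fst A)" "f' \<in> carrier_mat (fst A) (fst B)"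
    and gc: "g \<in> carrier_mat (fst C) (fst B)" "g' \<in> carrier_mat (fst B) (fst C)"
    using f g by (auto simp: hom_def)
  have "g * f * (f' * g') = g * (f * f') * g'"
    using mat_assoc4[OF gc(1) fc(1) fc(2) gc(2)] .
  also have "\<dots> = 1\<^sub>m (fst C)" using gc by (simp only: f(3) right_mult_one_mat g(3))
  finally have 1: "g * f * (f' * g') = 1\<^sub>m (fst C)" .
  have "f' * g' * (g * f) = f' * (g' * g) * f"
    using mat_assoc4[OF fc(2) gc(2) gc(1) fc(1)] .
  also have "\<dots> = 1\<^sub>m (fst A)" using fc by (simp only: g(4) right_mult_one_mat f(4))
  finally have 2: "f' * g' * (g * f) = 1\<^sub>m (fst A)" .
  show ?thesis unfolding iso_def
    by (rule exI[of _ "g * f"], rule exI[of _ "f' * g'"], intro conjI hom_comp[OF assms(1-3) f(1) g(1)] hom_comp[OF assms(3,2,1) g(2) f(2)] 1 2)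
qed

lemma retract_trans:
  assumes "wfm H A" "wfm H B" "wfm H C" "retract H A B" "retract H B C"
  shows "retract H A C"
proof -
  obtain f f' where f: "hom H A B f" "hom H B A f'" "f' * f = 1\<^sub>m (fst A)"
    using assms(4) by (auto simp: retract_def)
  obtain g g' where g: "hom H B C g" "hom H C B g'" "g' * g = 1\<^sub>m (fst B)"
    using assms(5) by (auto simp: retract_def)
  have fc: "f \<in> carrier_mat (fst B) (fst A)" "f' \<in> carrier_mat (fst A) (fst B)"
    and gc: "g \<in> carrier_mat (fst C) (fst B)" "g' \<in> carrier_mat (fst B) (fst C)"
    using f g by (auto simp: hom_def)
  have "f' * g' * (g * f) = f' * (g' * g) * f"
    using mat_assoc4[OF fc(2) gc(2) gc(1) fc(1)] .
  also have "\<dots> = 1\<^sub>m (fst A)" using fc by (simp only: g(3) right_mult_one_mat f(3))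
  finally have 2: "f' * g' * (g * f) = 1\<^sub>m (fst A)" .
  show ?thesis unfolding retract_def
    by (rule exI[of _ "g * f"], rule exI[of _ "f' * g'"], intro conjI hom_comp[OF assms(1-3) f(1) g(1)] hom_comp[OF assms(3,2,1) g(2) f(2)] 2)
qed

lemma projective_retract:
  assumes A: "wfm H A" and B: "wfm H B" and r: "retract H A B" and P: "projective H B"
  shows "projective H A"
  unfolding projective_def
proof (intro allI impI)
  fix N Q g f assume a: "is_mod H N \<and> is_mod H Q \<and> hom H N Q g \<and> surj_mat g \<and> hom H A Q f"
  obtain i p where ip: "hom H A B i" "hom H B A p" "p * i = 1\<^sub>m (fst A)"
    using r by (auto simp: retract_def)
  have Q: "wfm H Q" and N: "wfm H N" using a by (auto simp: is_mod_wf)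
  have "hom H B Q (f * p)" using hom_comp[OF B A Q ip(2)] a by blast
  then have "\<exists>h. hom H B N h \<and> g * h = f * p"
    using P[unfolded projective_def, rule_format, of N Q g "f * p"] a by simp
  then obtain h where h: "hom H B N h" "g * h = f * p" by blast
  have hi: "hom H A N (h * i)" using hom_comp[OF A B N ip(1) h(1)] .
  have gc: "g \<in> carrier_mat (fst Q) (fst N)" and hc: "h \<in> carrier_mat (fst N) (fst B)"
    and ic: "i \<in> carrier_mat (fst B) (fst A)" and pc: "p \<in> carrier_mat (fst A) (fst B)"
    and fc: "f \<in> carrier_mat (fst Q) (fst A)"
    using a h ip by (auto simp: hom_def)
  have "g * (h * i) = g * h * i" using gc hc ic by (simp add: assoc_mult_mat[of _ _ _ _ _ _ "fst A"])
  also have "\<dots> = f * p * i" using h by simp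
  also have "\<dots> = f * (p * i)" using fc pc ic by (simp add: assoc_mult_mat[of _ _ _ _ _ _ "fst A"])
  also have "\<dots> = f" using ip fc by simp
  finally show "\<exists>h. hom H A N h \<and> g * h = f" using hi by (intro exI[of _ "h * i"] conjI)
qed

lemma projective_iso:
  "wfm H A \<Longrightarrow> wfm H B \<Longrightarrow> iso H A B \<Longrightarrow> projective H B \<Longrightarrow> projective H A"
  by (rule projective_retract) (auto intro: iso_retract)

lemma wf_dual: "wfm H (dual H M)"
  by (simp add: wfm_def dual_def lc_mlc)

lemma tensor_hom_iso:
  assumes "wfm H A" "wfm H A'" "wfm H B" "wfm H B'" "iso H A A'" "iso H B B'"
  shows "iso H (tensor H A B) (tensor H A' B')"
proof -
  obtain f f' where f: "hom H A A' f" "hom H A' A f'" "f * f' = 1\<^sub>m (fst A')" "f' * f = 1\<^sub>m (fst A)"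
    using assms(5) by (auto simp: iso_def)
  obtain g g' where g: "hom H B B' g" "hom H B' B g'" "g * g' = 1\<^sub>m (fst B')" "g' * g = 1\<^sub>m (fst B)"
    using assms(6) by (auto simp: iso_def)
  have fc: "f \<in> carrier_mat (fst A') (fst A)" "f' \<in> carrier_mat (fst A) (fst A')"
    and gc: "g \<in> carrier_mat (fst B') (fst B)" "g' \<in> carrier_mat (fst B) (fst B')"
    using f g by (auto simp: hom_def)
  have 1: "kron f g * kron f' g' = 1\<^sub>m (fst (tensor H A' B'))"
    using kron_mult[OF fc(1) fc(2) gc(1) gc(2)] f g by (simp add: kron_one)
  have 2: "kron f' g' * kron f g = 1\<^sub>m (fst (tensor H A B))"
    using kron_mult[OF fc(2) fc(1) gc(2) gc(1)] f g by (simp add: kron_one)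
  show ?thesis unfolding iso_def
    by (rule exI[of _ "kron f g"], rule exI[of _ "kron f' g'"], intro conjI hom_tensor[OF assms(1,3,2,4) f(1) g(1)] hom_tensor[OF assms(2,4,1,3) f(2) g(2)] 1 2)
qed

lemma tensor_hom_retract:
  assumes "wfm H A" "wfm H A'" "wfm H B" "wfm H B'" "retract H A A'" "retract H B B'"
  shows "retract H (tensor H A B) (tensor H A' B')"
proof -
  obtain f f' where f: "hom H A A' f" "hom H A' A f'" "f' * f = 1\<^sub>m (fst A)"
    using assms(5) by (auto simp: retract_def)
  obtain g g' where g: "hom H B B' g" "hom H B' B g'" "g' * g = 1\<^sub>m (fst B)"
    using assms(6) by (auto simp: retract_def)
  have fc: "f \<in> carrier_mat (fst A') (fst A)" "f' \<in> carrier_mat (fst A) (fst A')"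
    and gc: "g \<in> carrier_mat (fst B') (fst B)" "g' \<in> carrier_mat (fst B) (fst B')"
    using f g by (auto simp: hom_def)
  have 2: "kron f' g' * kron f g = 1\<^sub>m (fst (tensor H A B))"
    using kron_mult[OF fc(2) fc(1) gc(2) gc(1)] f g by (simp add: kron_one)
  show ?thesis unfolding retract_def
    by (rule exI[of _ "kron f g"], rule exI[of _ "kron f' g'"], intro conjI hom_tensor[OF assms(1,3,2,4) f(1) g(1)] hom_tensor[OF assms(2,4,1,3) f(2) g(2)] 2)
qed

lemma iso_refl: "wfm H A \<Longrightarrow> iso H A A"
  by (rule same_iso) (auto simp: same_def)

lemma retract_refl: "wfm H A \<Longrightarrow> retract H A A"
  by (rule iso_retract[OF iso_refl])

lemma carrier00: "A \<in> carrier_mat 0 0 \<Longrightarrow> B \<in> carrier_mat 0 0 \<Longrightarrow> A = B"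
  by (rule eq_matI) auto

lemma mult00: "n = 0 \<Longrightarrow> A \<in> carrier_mat n n \<Longrightarrow> B \<in> carrier_mat n n \<Longrightarrow> C \<in> carrier_mat n n \<Longrightarrow> A * B = C"
  by (rule carrier00) auto

context hopf begin

lemma coef_dmult:
  assumes i: "i < d" and j: "j < d" and l: "l < d" and b: "b < d"
  shows "(\<Sum>x\<in>PP. (case x of (p,q) \<Rightarrow> delta H i p q) * (\<Sum>y\<in>PP. (case y of (r,s) \<Rightarrow> delta H j r s) *
          (mu H (fst x) (fst y) l * mu H (snd x) (snd y) b))) = (\<Sum>c<d. mu H i j c * delta H c l b)"
proof -
  have "(\<Sum>x\<in>PP. (case x of (p,q) \<Rightarrow> delta H i p q) * (\<Sum>y\<in>PP. (case y of (r,s) \<Rightarrow> delta H j r s) *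
          (mu H (fst x) (fst y) l * mu H (snd x) (snd y) b))) =
          (\<Sum>p<d. \<Sum>q<d. \<Sum>r<d. \<Sum>s<d. delta H i p q * delta H j r s * mu H p r l * mu H q s b)"
    by (simp add: sum_pair sum_distrib_left ac_simps)
  also have "\<dots> = (\<Sum>c<d. mu H i j c * delta H c l b)"
    using ax_dmult[OF i j l b] by simp
  finally show ?thesis .
qed

lemma kron_mod_mult:
  assumes M: "is_mod H M" and N: "is_mod H N" and m: "fst M > 0" and n: "fst N > 0"
    and p: "p < d" and q: "q < d" and r: "r < d" and s: "s < d"
  shows "kron (snd M p) (snd N q) * kron (snd M r) (snd N s) =
    mlc PP (\<lambda>(x,y). mu H p r x * mu H q s y) (\<lambda>(x,y). kron (snd M x) (snd N y)) (fst M * fst N) (fst M * fst N)"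
proof -
  let ?m = "fst M" and ?n = "fst N"
  have cM: "\<And>i. i < d \<Longrightarrow> snd M i \<in> carrier_mat ?m ?m" using mod_carrier[OF M] by auto
  have cN: "\<And>i. i < d \<Longrightarrow> snd N i \<in> carrier_mat ?n ?n" using mod_carrier[OF N] by auto
  have "kron (snd M p) (snd N q) * kron (snd M r) (snd N s) = kron (snd M p * snd M r) (snd N q * snd N s)"
    by (rule kron_mult[OF cM[OF p] cM[OF r] cN[OF q] cN[OF s]])
  also have "\<dots> = kron (mlc D (mu H p r) (snd M) ?m ?m) (mlc D (mu H q s) (snd N) ?n ?n)"
    using mod_mult[OF M p r] mod_mult[OF N q s] by simp
  also have "\<dots> = mlc D (mu H p r) (\<lambda>x. kron (snd M x) (mlc D (mu H q s) (snd N) ?n ?n)) (?m * ?n) (?m * ?n)"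
    using kron_mlc_left[of D "snd M" ?m ?m "mu H p r" "mlc D (mu H q s) (snd N) ?n ?n"] cM m by simp
  also have "\<dots> = mlc D (mu H p r) (\<lambda>x. mlc D (mu H q s) (\<lambda>y. kron (snd M x) (snd N y)) (?m * ?n) (?m * ?n)) (?m * ?n) (?m * ?n)"
  proof (rule mlc_eqI2)
    fix x assume x: "x \<in> D"
    show "kron (snd M x) (mlc D (mu H q s) (snd N) ?n ?n) = mlc D (mu H q s) (\<lambda>y. kron (snd M x) (snd N y)) (?m * ?n) (?m * ?n)"
      using kron_mlc_right[of D "snd N" ?n ?n "snd M x" "mu H q s"] cN n cM[of x] x by simp
  qed
  also have "\<dots> = mlc (D \<times> D) (\<lambda>(x,y). mu H p r x * mu H q s y) (\<lambda>(x,y). kron (snd M x) (snd N y)) (?m * ?n) (?m * ?n)"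
    by (rule mlc_prod) auto
  finally show ?thesis .
qed

lemma tensor_is_mod:
  assumes M: "is_mod H M" and N: "is_mod H N"
  shows "is_mod H (tensor H M N)"
proof (cases "fst M * fst N = 0")
  case True
  show ?thesis unfolding is_mod_def Let_def tensor_fst
  proof (intro conjI allI impI)
    fix i assume "i < d" then show "snd (tensor H M N) i \<in> carrier_mat (fst M * fst N) (fst M * fst N)"
      by (simp add: tensor_mlc)
  next
    fix i j assume "i < d" "j < d"
    then show "snd (tensor H M N) i * snd (tensor H M N) j = lc d (fst M * fst N) (mu H i j) (snd (tensor H M N))"
      using True by (intro mult00[of "fst M * fst N"]) (auto simp: tensor_mlc lc_mlc)
  next
    show "lc d (fst M * fst N) (eta H) (snd (tensor H M N)) = 1\<^sub>m (fst M * fst N)"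
      using True by (intro carrier00) (auto simp: lc_mlc)
  qed
next
  case False
  then have m: "fst M > 0" and n: "fst N > 0" by auto
  let ?m = "fst M" and ?n = "fst N"
  let ?K = "\<lambda>(p,q). kron (snd M p) (snd N q)"
  have cM: "\<And>i. i < d \<Longrightarrow> snd M i \<in> carrier_mat ?m ?m" using mod_carrier[OF M] by auto
  have cN: "\<And>i. i < d \<Longrightarrow> snd N i \<in> carrier_mat ?n ?n" using mod_carrier[OF N] by auto
  have cK: "\<And>x. x \<in> PP \<Longrightarrow> ?K x \<in> carrier_mat (?m * ?n) (?m * ?n)"
    using cM cN by (auto intro!: kron_carrier_mat)
  show ?thesis unfolding is_mod_def Let_def tensor_fst
  proof (intro conjI allI impI)
    fix i assume "i < d" then show "snd (tensor H M N) i \<in> carrier_mat (?m * ?n) (?m * ?n)"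
      by (simp add: tensor_mlc)
  next
    fix i j assume i: "i < d" and j: "j < d"
    have "snd (tensor H M N) i * snd (tensor H M N) j = mlc PP (\<lambda>(p,q). delta H i p q) (\<lambda>x. ?K x * mlc PP (\<lambda>(p,q). delta H j p q) ?K (?m * ?n) (?m * ?n)) (?m * ?n) (?m * ?n)"
      unfolding tensor_mlc by (rule mlc_mult_right) (use cK in auto)
    also have "\<dots> = mlc PP (\<lambda>(p,q). delta H i p q) (\<lambda>x. mlc PP (\<lambda>(p,q). delta H j p q) (\<lambda>y. ?K x * ?K y) (?m * ?n) (?m * ?n)) (?m * ?n) (?m * ?n)"
      by (rule mlc_eqI2, rule mlc_mult_left) (use cK in auto)
    also have "\<dots> = mlc PP (\<lambda>(p,q). delta H i p q) (\<lambda>x. mlc PP (\<lambda>(p,q). delta H j p q) (\<lambda>y. mlc PP (\<lambda>z. mu H (fst x) (fst y) (fst z) * mu H (snd x) (snd y) (snd z)) ?K (?m * ?n) (?m * ?n)) (?m * ?n) (?m * ?n)) (?m * ?n) (?m * ?n)"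
    proof (rule mlc_eqI2, rule mlc_eqI2)
      fix x y assume x: "x \<in> PP" and y: "y \<in> PP"
      then show "?K x * ?K y = mlc PP (\<lambda>z. mu H (fst x) (fst y) (fst z) * mu H (snd x) (snd y) (snd z)) ?K (?m * ?n) (?m * ?n)"
        using kron_mod_mult[OF M N m n, of "fst x" "snd x" "fst y" "snd y"]
        by (auto simp: case_prod_beta intro!: mlc_coeff_cong)
    qed
    also have "\<dots> = mlc PP (\<lambda>(p,q). delta H i p q) (\<lambda>x. mlc PP (\<lambda>z. \<Sum>y\<in>PP. (case y of (p,q) \<Rightarrow> delta H j p q) * (mu H (fst x) (fst y) (fst z) * mu H (snd x) (snd y) (snd z))) ?K (?m * ?n) (?m * ?n)) (?m * ?n) (?m * ?n)"
      by (rule mlc_eqI2, rule mlc_collapse) auto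
    also have "\<dots> = mlc PP (\<lambda>z. \<Sum>x\<in>PP. (case x of (p,q) \<Rightarrow> delta H i p q) * (\<Sum>y\<in>PP. (case y of (p,q) \<Rightarrow> delta H j p q) * (mu H (fst x) (fst y) (fst z) * mu H (snd x) (snd y) (snd z)))) ?K (?m * ?n) (?m * ?n)"
      by (rule mlc_collapse) auto
    also have "\<dots> = mlc PP (\<lambda>z. \<Sum>c\<in>D. mu H i j c * (case z of (l,b) \<Rightarrow> delta H c l b)) ?K (?m * ?n) (?m * ?n)"
    proof (rule mlc_coeff_cong)
      fix z assume z: "z \<in> PP"
      obtain l b where lb: "z = (l,b)" "l < d" "b < d" using z by auto
      show "(\<Sum>x\<in>PP. (case x of (p,q) \<Rightarrow> delta H i p q) * (\<Sum>y\<in>PP. (case y of (p,q) \<Rightarrow> delta H j p q) * (mu H (fst x) (fst y) (fst z) * mu H (snd x) (snd y) (snd z)))) =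
         (\<Sum>c\<in>D. mu H i j c * (case z of (l,b) \<Rightarrow> delta H c l b))"
        using coef_dmult[OF i j lb(2) lb(3)] lb by simp
    qed
    also have "\<dots> = mlc D (mu H i j) (\<lambda>c. mlc PP (\<lambda>(l,b). delta H c l b) ?K (?m * ?n) (?m * ?n)) (?m * ?n) (?m * ?n)"
      by (rule mlc_collapse[symmetric]) auto
    also have "\<dots> = lc d (?m * ?n) (mu H i j) (snd (tensor H M N))"
      unfolding lc_mlc by (rule mlc_eqI2) (simp add: tensor_mlc)
    finally show "snd (tensor H M N) i * snd (tensor H M N) j = lc d (?m * ?n) (mu H i j) (snd (tensor H M N))" .
  next
    have "lc d (?m * ?n) (eta H) (snd (tensor H M N)) = mlc D (eta H) (\<lambda>l. mlc PP (\<lambda>(p,q). delta H l p q) ?K (?m * ?n) (?m * ?n)) (?m * ?n) (?m * ?n)"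
      unfolding lc_mlc by (rule mlc_eqI2) (simp add: tensor_mlc)
    also have "\<dots> = mlc PP (\<lambda>z. \<Sum>l\<in>D. eta H l * (case z of (p,q) \<Rightarrow> delta H l p q)) ?K (?m * ?n) (?m * ?n)"
      by (rule mlc_collapse) auto
    also have "\<dots> = mlc (D \<times> D) (\<lambda>(x,y). eta H x * eta H y) ?K (?m * ?n) (?m * ?n)"
      by (rule mlc_coeff_cong) (auto simp: ax_dunit)
    also have "\<dots> = mlc D (eta H) (\<lambda>x. mlc D (eta H) (\<lambda>y. kron (snd M x) (snd N y)) (?m * ?n) (?m * ?n)) (?m * ?n) (?m * ?n)"
      by (rule mlc_prod[symmetric]) auto
    also have "\<dots> = mlc D (eta H) (\<lambda>x. kron (snd M x) (mlc D (eta H) (snd N) ?n ?n)) (?m * ?n) (?m * ?n)"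
    proof (rule mlc_eqI2)
      fix x assume x: "x \<in> D"
      show "mlc D (eta H) (\<lambda>y. kron (snd M x) (snd N y)) (?m * ?n) (?m * ?n) = kron (snd M x) (mlc D (eta H) (snd N) ?n ?n)"
        using kron_mlc_right[of D "snd N" ?n ?n "snd M x" "eta H"] cN n cM[of x] x by simp
    qed
    also have "\<dots> = kron (mlc D (eta H) (snd M) ?m ?m) (mlc D (eta H) (snd N) ?n ?n)"
      using kron_mlc_left[of D "snd M" ?m ?m "eta H" "mlc D (eta H) (snd N) ?n ?n"] cM m by simp
    also have "\<dots> = 1\<^sub>m (?m * ?n)"
      using mod_unit[OF M] mod_unit[OF N] by (simp add: kron_one)
    finally show "lc d (?m * ?n) (eta H) (snd (tensor H M N)) = 1\<^sub>m (?m * ?n)" .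
  qed
qed

lemma triv_is_mod: "is_mod H (tpow H M 0)"
  unfolding is_mod_def Let_def
proof (intro conjI allI impI)
  fix i j assume i: "i < d" and j: "j < d"
  show "snd (tpow H M 0) i * snd (tpow H M 0) j = lc d (fst (tpow H M 0)) (mu H i j) (snd (tpow H M 0))"
    by (rule eq_matI) (use ax_emult[OF i j] in \<open>auto simp: lc_def scalar_prod_def mult.commute\<close>)
next
  show "lc d (fst (tpow H M 0)) (eta H) (snd (tpow H M 0)) = 1\<^sub>m (fst (tpow H M 0))"
    by (rule eq_matI) (use ax_eunit in \<open>auto simp: lc_def\<close>)
qed auto

lemma unitor_right:
  assumes M: "wfm H M"
  shows "same H (tensor H M (tpow H X 0)) M"
  unfolding same_def
proof (intro conjI allI impI)
  show "fst (tensor H M (tpow H X 0)) = fst M" by simp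
  fix l assume l: "l < d"
  show "snd (tensor H M (tpow H X 0)) l = snd M l"
  proof (rule eq_matI)
    fix u v assume uv: "u < dim_row (snd M l)" "v < dim_col (snd M l)"
    then have u: "u < fst M" and v: "v < fst M" using wfD[OF M l] by auto
    have "snd (tensor H M (tpow H X 0)) l $$ (u,v) = (\<Sum>p<d. \<Sum>q<d. delta H l p q * (eps H q * snd M p $$ (u,v)))"
      unfolding tensor_mlc using u v
    proof (simp add: mlc_index sum_pair, intro sum.cong refl)
      fix p q assume pq: "p \<in> D" "q \<in> D"
      show "delta H l p q * kron (snd M p) (mat (Suc 0) (Suc 0) (\<lambda>_. eps H q)) $$ (u, v) = delta H l p q * (eps H q * snd M p $$ (u,v))"
        using wfD[OF M, of p] pq u v by (simp add: kron_index)
    qed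
    also have "\<dots> = snd M l $$ (u,v)" by (rule counit_app1[OF l])
    finally show "snd (tensor H M (tpow H X 0)) l $$ (u,v) = snd M l $$ (u,v)" .
  qed (use wfD[OF M l] in \<open>auto simp: tensor_mlc\<close>)
qed

lemma unitor_left:
  assumes M: "wfm H M"
  shows "same H (tensor H (tpow H X 0) M) M"
  unfolding same_def
proof (intro conjI allI impI)
  show "fst (tensor H (tpow H X 0) M) = fst M" by simp
  fix l assume l: "l < d"
  show "snd (tensor H (tpow H X 0) M) l = snd M l"
  proof (rule eq_matI)
    fix u v assume uv: "u < dim_row (snd M l)" "v < dim_col (snd M l)"
    then have u: "u < fst M" and v: "v < fst M" using wfD[OF M l] by auto
    have "snd (tensor H (tpow H X 0) M) l $$ (u,v) = (\<Sum>p<d. \<Sum>q<d. delta H l p q * (eps H p * snd M q $$ (u,v)))"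
      unfolding tensor_mlc using u v
    proof (simp add: mlc_index sum_pair, intro sum.cong refl)
      fix p q assume pq: "p \<in> D" "q \<in> D"
      show "delta H l p q * kron (mat (Suc 0) (Suc 0) (\<lambda>_. eps H p)) (snd M q) $$ (u, v) = delta H l p q * (eps H p * snd M q $$ (u,v))"
        using wfD[OF M, of q] pq u v by (simp add: kron_index)
    qed
    also have "\<dots> = snd M l $$ (u,v)" by (rule counit_app2[OF l])
    finally show "snd (tensor H (tpow H X 0) M) l $$ (u,v) = snd M l $$ (u,v)" .
  qed (use wfD[OF M l] in \<open>auto simp: tensor_mlc\<close>)
qed

lemma tensor_assoc:
  assumes M: "wfm H M" and N: "wfm H N" and L: "wfm H L"
  shows "same H (tensor H (tensor H M N) L) (tensor H M (tensor H N L))"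
proof (cases "fst M * fst N * fst L = 0")
  case True
  show ?thesis unfolding same_def
    using True by (auto simp: tensor_mlc mult.assoc intro!: carrier00)
next
  case False
  then have m: "fst M > 0" and n: "fst N > 0" and ll: "fst L > 0" by auto
  let ?m = "fst M" and ?n = "fst N" and ?l = "fst L"
  show ?thesis unfolding same_def
  proof (intro conjI allI impI)
    show "fst (tensor H (tensor H M N) L) = fst (tensor H M (tensor H N L))" by (simp add: mult.assoc)
    fix l assume l: "l < d"
    have "snd (tensor H (tensor H M N) L) l = mlc PP (\<lambda>(i,j). delta H l i j)
        (\<lambda>(i,j). mlc PP (\<lambda>(p,q). delta H i p q) (\<lambda>(p,q). kron (kron (snd M p) (snd N q)) (snd L j)) (?m * ?n * ?l) (?m * ?n * ?l)) (?m * ?n * ?l) (?m * ?n * ?l)"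
      unfolding tensor_mlc[of H "tensor H M N"] tensor_fst
    proof (rule mlc_eqI2)
      fix x assume x: "x \<in> PP"
      obtain i j where ij: "x = (i,j)" "i < d" "j < d" using x by auto
      have "kron (snd (tensor H M N) i) (snd L j) = mlc PP (\<lambda>(p,q). delta H i p q) (\<lambda>y. kron (case y of (p,q) \<Rightarrow> kron (snd M p) (snd N q)) (snd L j)) (?m * ?n * ?l) (?m * ?n * ?l)"
        unfolding tensor_mlc
        using kron_mlc_left[of PP "\<lambda>(p,q). kron (snd M p) (snd N q)" "?m * ?n" "?m * ?n" "\<lambda>(p,q). delta H i p q" "snd L j"]
          m n wfD[OF L ij(3)] wfD[OF M] wfD[OF N]
        by (auto intro!: kron_carrier_mat)
      also have "\<dots> = mlc PP (\<lambda>(p,q). delta H i p q) (\<lambda>(p,q). kron (kron (snd M p) (snd N q)) (snd L j)) (?m * ?n * ?l) (?m * ?n * ?l)"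
        by (rule mlc_eqI2) auto
      finally show "(case x of (i,j) \<Rightarrow> kron (snd (tensor H M N) i) (snd L j)) =
        (case x of (i,j) \<Rightarrow> mlc PP (\<lambda>(p,q). delta H i p q) (\<lambda>(p,q). kron (kron (snd M p) (snd N q)) (snd L j)) (?m * ?n * ?l) (?m * ?n * ?l))"
        using ij by simp
    qed
    also have "\<dots> = mlc PP (\<lambda>(p,i). delta H l p i)
        (\<lambda>(p,i). mlc PP (\<lambda>(q,j). delta H i q j) (\<lambda>(q,j). kron (kron (snd M p) (snd N q)) (snd L j)) (?m * ?n * ?l) (?m * ?n * ?l)) (?m * ?n * ?l) (?m * ?n * ?l)"
      by (rule mlc_CA_mat[OF l, where L = "\<lambda>p q j. kron (kron (snd M p) (snd N q)) (snd L j)"])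
    also have "\<dots> = snd (tensor H M (tensor H N L)) l"
      unfolding tensor_mlc[of H M] tensor_fst mult.assoc
    proof (rule mlc_eqI2)
      fix x assume x: "x \<in> PP"
      obtain p i where ij: "x = (p,i)" "p < d" "i < d" using x by auto
      have "kron (snd M p) (snd (tensor H N L) i) = mlc PP (\<lambda>(q,j). delta H i q j) (\<lambda>y. kron (snd M p) (case y of (q,j) \<Rightarrow> kron (snd N q) (snd L j))) (?m * (?n * ?l)) (?m * (?n * ?l))"
        unfolding tensor_mlc
        using kron_mlc_right[of PP "\<lambda>(q,j). kron (snd N q) (snd L j)" "?n * ?l" "?n * ?l" "snd M p" "\<lambda>(q,j). delta H i q j"]
          ll n wfD[OF M ij(2)] wfD[OF N] wfD[OF L]
        by (auto intro!: kron_carrier_mat)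
      also have "\<dots> = mlc PP (\<lambda>(q,j). delta H i q j) (\<lambda>(q,j). kron (kron (snd M p) (snd N q)) (snd L j)) (?m * (?n * ?l)) (?m * (?n * ?l))"
        by (rule mlc_eqI2) (auto simp: kron_assoc)
      finally show "(case x of (p,i) \<Rightarrow> mlc PP (\<lambda>(q,j). delta H i q j) (\<lambda>(q,j). kron (kron (snd M p) (snd N q)) (snd L j)) (?m * (?n * ?l)) (?m * (?n * ?l))) =
        (case x of (p,i) \<Rightarrow> kron (snd M p) (snd (tensor H N L) i))"
        using ij by simp
    qed
    finally show "snd (tensor H (tensor H M N) L) l = snd (tensor H M (tensor H N L)) l" .
  qed
qed

end

definition coev :: "nat \<Rightarrow> 'k::field mat" where
  "coev n = mat (n*n) 1 (\<lambda>(r,_). kd (r div n) (r mod n))"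
definition ev :: "nat \<Rightarrow> 'k::field mat" where
  "ev n = mat 1 (n*n) (\<lambda>(_,s). kd (s div n) (s mod n))"
definition vecm :: "nat \<Rightarrow> 'k::field mat \<Rightarrow> 'k mat" where
  "vecm n Z = mat (n*n) 1 (\<lambda>(r,_). Z $$ (r div n, r mod n))"
definition covecm :: "nat \<Rightarrow> 'k::field mat \<Rightarrow> 'k mat" where
  "covecm n Z = mat 1 (n*n) (\<lambda>(_,s). Z $$ (s div n, s mod n))"

lemma coev_carrier[simp]: "coev n \<in> carrier_mat (n*n) 1" by (simp add: coev_def)
lemma ev_carrier[simp]: "ev n \<in> carrier_mat 1 (n*n)" by (simp add: ev_def)
lemma coev_dims[simp]: "dim_row (coev n) = n*n" "dim_col (coev n) = 1" by (simp_all add: coev_def)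
lemma ev_dims[simp]: "dim_row (ev n) = 1" "dim_col (ev n) = n*n" by (simp_all add: ev_def)

lemma kd_sum_l: "i < n \<Longrightarrow> (\<Sum>x<n. kd i x * f x) = (f i::'k::field)"
proof -
  assume "i < n"
  have "(\<Sum>x<n. kd i x * f x) = (\<Sum>x\<in>{..<n}. if x = i then f x else 0)"
    by (rule sum.cong) (auto simp: kd_def)
  also have "\<dots> = f i" using \<open>i < n\<close> by simp
  finally show ?thesis .
qed

lemma kron_T_coev:
  assumes A: "A \<in> carrier_mat n n" and B: "B \<in> carrier_mat n n"
  shows "kron A (transpose_mat B) * coev n = vecm n (A * B)"
proof (rule eq_matI)
  fix r c assume r: "r < dim_row (vecm n (A * B))" and c: "c < dim_col (vecm n (A * B))"
  then have r': "r < n * n" and c0: "c = 0" by (auto simp: vecm_def)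
  have rd: "r div n < n" "r mod n < n" using divmod_lt[OF r'] by auto
  have "(kron A (transpose_mat B) * coev n) $$ (r,c) = (\<Sum>t<n*n. kron A (transpose_mat B) $$ (r,t) * coev n $$ (t,0))"
    using A B r' c0 by (simp add: scalar_prod_def atLeast0LessThan)
  also have "\<dots> = (\<Sum>y<n. \<Sum>g<n. kron A (transpose_mat B) $$ (r,y*n+g) * coev n $$ (y*n+g,0))"
    by (rule sum_split_mult)
  also have "\<dots> = (\<Sum>y<n. \<Sum>g<n. kd y g * (A $$ (r div n, y) * B $$ (g, r mod n)))"
  proof (intro sum.cong refl)
    fix y g assume yg: "y \<in> {..<n}" "g \<in> {..<n}"
    then have t: "y*n+g < n*n" by (simp add: idx_lt)
    show "kron A (transpose_mat B) $$ (r,y*n+g) * coev n $$ (y*n+g,0) = kd y g * (A $$ (r div n, y) * B $$ (g, r mod n))"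
      using A B r' t yg by (simp add: kron_index coev_def)
  qed
  also have "\<dots> = (\<Sum>y<n. A $$ (r div n, y) * B $$ (y, r mod n))"
    by (intro sum.cong refl) (simp add: kd_sum_l)
  also have "\<dots> = vecm n (A * B) $$ (r,c)"
    using A B r' c0 rd by (simp add: vecm_def scalar_prod_def atLeast0LessThan)
  finally show "(kron A (transpose_mat B) * coev n) $$ (r,c) = vecm n (A * B) $$ (r,c)" .
qed (use A B in \<open>auto simp: vecm_def\<close>)

lemma ev_kron_T:
  assumes A: "A \<in> carrier_mat n n" and B: "B \<in> carrier_mat n n"
  shows "ev n * kron (transpose_mat B) A = covecm n (B * A)"
proof (rule eq_matI)
  fix r c assume r: "r < dim_row (covecm n (B * A))" and c: "c < dim_col (covecm n (B * A))"
  then have c': "c < n * n" and r0: "r = 0" by (auto simp: covecm_def)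
  have cd: "c div n < n" "c mod n < n" using divmod_lt[OF c'] by auto
  have "(ev n * kron (transpose_mat B) A) $$ (r,c) = (\<Sum>t<n*n. ev n $$ (0,t) * kron (transpose_mat B) A $$ (t,c))"
    using A B c' r0 by (simp add: scalar_prod_def atLeast0LessThan)
  also have "\<dots> = (\<Sum>f<n. \<Sum>x<n. ev n $$ (0,f*n+x) * kron (transpose_mat B) A $$ (f*n+x,c))"
    by (rule sum_split_mult)
  also have "\<dots> = (\<Sum>f<n. \<Sum>x<n. kd f x * (B $$ (c div n, f) * A $$ (x, c mod n)))"
  proof (intro sum.cong refl)
    fix f x assume yg: "f \<in> {..<n}" "x \<in> {..<n}"
    then have t: "f*n+x < n*n" by (simp add: idx_lt)
    show "ev n $$ (0,f*n+x) * kron (transpose_mat B) A $$ (f*n+x,c) = kd f x * (B $$ (c div n, f) * A $$ (x, c mod n))"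
      using A B c' t yg cd by (simp add: kron_index ev_def)
  qed
  also have "\<dots> = (\<Sum>f<n. B $$ (c div n, f) * A $$ (f, c mod n))"
    by (intro sum.cong refl) (simp add: kd_sum_l)
  also have "\<dots> = covecm n (B * A) $$ (r,c)"
    using A B c' r0 cd by (simp add: covecm_def scalar_prod_def atLeast0LessThan)
  finally show "(ev n * kron (transpose_mat B) A) $$ (r,c) = covecm n (B * A) $$ (r,c)" .
qed (use A B in \<open>auto simp: covecm_def\<close>)

lemma vecm_mlc:
  assumes "\<And>x. x \<in> X \<Longrightarrow> Z x \<in> carrier_mat n n"
  shows "mlc X c (\<lambda>x. vecm n (Z x)) (n*n) 1 = vecm n (mlc X c Z n n)"
proof (rule eq_matI)
  fix r s assume "r < dim_row (vecm n (mlc X c Z n n))" "s < dim_col (vecm n (mlc X c Z n n))"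
  then have r: "r < n*n" and s: "s = 0" by (auto simp: vecm_def)
  have rd: "r div n < n" "r mod n < n" using divmod_lt[OF r] by auto
  show "mlc X c (\<lambda>x. vecm n (Z x)) (n*n) 1 $$ (r,s) = vecm n (mlc X c Z n n) $$ (r,s)"
    using r s rd by (simp add: mlc_index vecm_def)
qed (auto simp: vecm_def)

lemma covecm_mlc:
  assumes "\<And>x. x \<in> X \<Longrightarrow> Z x \<in> carrier_mat n n"
  shows "mlc X c (\<lambda>x. covecm n (Z x)) 1 (n*n) = covecm n (mlc X c Z n n)"
proof (rule eq_matI)
  fix r s assume "r < dim_row (covecm n (mlc X c Z n n))" "s < dim_col (covecm n (mlc X c Z n n))"
  then have s: "s < n*n" and r: "r = 0" by (auto simp: covecm_def)
  have sd: "s div n < n" "s mod n < n" using divmod_lt[OF s] by auto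
  show "mlc X c (\<lambda>x. covecm n (Z x)) 1 (n*n) $$ (r,s) = covecm n (mlc X c Z n n) $$ (r,s)"
    using r s sd by (simp add: mlc_index covecm_def)
qed (auto simp: covecm_def)

lemma vecm_one: "vecm n (k \<cdot>\<^sub>m 1\<^sub>m n) = k \<cdot>\<^sub>m coev n"
  by (rule eq_matI) (auto simp: vecm_def coev_def kd_def dest!: divmod_lt)

lemma covecm_one: "covecm n (k \<cdot>\<^sub>m 1\<^sub>m n) = k \<cdot>\<^sub>m ev n"
  by (rule eq_matI) (auto simp: covecm_def ev_def kd_def dest!: divmod_lt)

lemma one_kd: "i < n \<Longrightarrow> j < n \<Longrightarrow> (1\<^sub>m n :: 'k::field mat) $$ (i,j) = kd i j"
  by (simp add: kd_def)

lemma zigzag: "kron (1\<^sub>m n) (ev n) * kron (coev n) (1\<^sub>m n) = (1\<^sub>m n :: 'k::field mat)"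
proof (rule eq_matI)
  fix r s assume "r < dim_row (1\<^sub>m n :: 'k mat)" "s < dim_col (1\<^sub>m n :: 'k mat)"
  then have r: "r < n" and s: "s < n" by auto
  have "(kron (1\<^sub>m n) (ev n) * kron (coev n) (1\<^sub>m n)) $$ (r,s) =
        (\<Sum>t<n*(n*n). kron (1\<^sub>m n) (ev n) $$ (r,t) * kron (coev n) (1\<^sub>m n :: 'k mat) $$ (t,s))"
    using r s by (simp add: scalar_prod_def atLeast0LessThan mult.assoc)
  also have "\<dots> = (\<Sum>a<n. \<Sum>b<n*n. kron (1\<^sub>m n) (ev n) $$ (r,a*(n*n)+b) * kron (coev n) (1\<^sub>m n :: 'k mat) $$ (a*(n*n)+b,s))"
    by (rule sum_split_mult)
  also have "\<dots> = (\<Sum>a<n. \<Sum>f<n. \<Sum>x<n. kron (1\<^sub>m n) (ev n) $$ (r,a*(n*n)+(f*n+x)) * kron (coev n) (1\<^sub>m n :: 'k mat) $$ (a*(n*n)+(f*n+x),s))"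
    by (rule sum.cong[OF refl sum_split_mult])
  also have "\<dots> = (\<Sum>a<n. \<Sum>f<n. \<Sum>x<n. kd r a * (kd f x * (kd a f * (kd x s :: 'k))))"
  proof (intro sum.cong refl)
    fix a f x assume afx: "a \<in> {..<n}" "f \<in> {..<n}" "x \<in> {..<n}"
    have fx: "f*n+x < n*n" using afx by (simp add: idx_lt)
    have t: "a*(n*n)+(f*n+x) < n*(n*n)" using afx fx by (simp add: idx_lt mult.commute)
    have e: "a*(n*n)+(f*n+x) = (a*n+f)*n + x" by (simp add: algebra_simps)
    have afl: "a*n+f < n*n" using afx by (simp add: idx_lt)
    have xl: "x < n" using afx by simp
    have d1: "(a*(n*n)+(f*n+x)) div n = a*n+f" "(a*(n*n)+(f*n+x)) mod n = x"
      by (simp_all only: e idx_div[OF xl] idx_mod[OF xl])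
    have d2: "(a*(n*n)+(f*n+x)) div (n*n) = a" "(a*(n*n)+(f*n+x)) mod (n*n) = f*n+x"
      by (simp_all only: idx_div[OF fx] idx_mod[OF fx])
    have ev_e: "ev n $$ (0, f*n+x) = (kd f x :: 'k)"
      using fx xl by (simp add: ev_def idx_div idx_mod)
    have co_e: "coev n $$ (a*n+f, 0) = (kd a f :: 'k)"
      using afl afx by (simp add: coev_def idx_div idx_mod)
    have k1: "kron (1\<^sub>m n :: 'k mat) (ev n) $$ (r,a*(n*n)+(f*n+x)) = kd r a * kd f x"
    proof -
      have "kron (1\<^sub>m n) (ev n) $$ (r,a*(n*n)+(f*n+x)) = (1\<^sub>m n :: 'k mat) $$ (r, a) * ev n $$ (0, f*n+x)"
        using kron_index[of r "1\<^sub>m n :: 'k mat" "ev n" "a*(n*n)+(f*n+x)"] r t d2 by simp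
      also have "\<dots> = kd r a * kd f x" using r afx by (simp only: one_kd ev_e lessThan_iff)
      finally show ?thesis .
    qed
    have k2: "kron (coev n) (1\<^sub>m n :: 'k mat) $$ (a*(n*n)+(f*n+x),s) = kd a f * kd x s"
    proof -
      have "kron (coev n) (1\<^sub>m n :: 'k mat) $$ (a*(n*n)+(f*n+x),s) = coev n $$ (a*n+f, 0) * (1\<^sub>m n :: 'k mat) $$ (x, s)"
        using kron_index[of "a*(n*n)+(f*n+x)" "coev n" "1\<^sub>m n :: 'k mat" s] s t d1 by (simp add: mult.assoc)
      also have "\<dots> = kd a f * kd x s" using s xl by (simp only: one_kd co_e)
      finally show ?thesis .
    qed
    show "kron (1\<^sub>m n) (ev n) $$ (r,a*(n*n)+(f*n+x)) * kron (coev n) (1\<^sub>m n :: 'k mat) $$ (a*(n*n)+(f*n+x),s) = kd r a * (kd f x * (kd a f * kd x s))"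
      using k1 k2 by (simp add: ac_simps)
  qed
  also have "\<dots> = (\<Sum>a<n. kd r a * (\<Sum>f<n. \<Sum>x<n. kd f x * (kd a f * (kd x s :: 'k))))"
    by (simp add: sum_distrib_left)
  also have "\<dots> = (\<Sum>f<n. \<Sum>x<n. kd f x * (kd r f * (kd x s :: 'k)))"
    by (rule kd_sum_l[OF r])
  also have "\<dots> = (\<Sum>f<n. kd r f * (kd f s :: 'k))"
    by (intro sum.cong refl) (simp add: kd_sum_l s)
  also have "\<dots> = kd r s" using r by (simp add: kd_sum_l)
  also have "\<dots> = (1\<^sub>m n :: 'k mat) $$ (r,s)" using r s by (simp add: kd_def)
  finally show "(kron (1\<^sub>m n) (ev n) * kron (coev n) (1\<^sub>m n)) $$ (r,s) = (1\<^sub>m n :: 'k mat) $$ (r,s)" .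
qed auto

lemma tpow0_fst: "fst (tpow H X 0) = 1" by (simp only: tpow.simps fst_conv)
lemma tpow0_snd: "snd (tpow H X 0) l = mat 1 1 (\<lambda>_. eps H l)" by (simp only: tpow.simps snd_conv)

lemma coev_smult: "coev n * mat 1 1 (\<lambda>_. c) = c \<cdot>\<^sub>m coev n"
  by (rule eq_matI) (auto simp: coev_def scalar_prod_def)
lemma ev_smult: "mat 1 1 (\<lambda>_. c) * ev n = c \<cdot>\<^sub>m ev n"
  by (rule eq_matI) (auto simp: ev_def scalar_prod_def)

context hopf begin

lemma coev_hom:
  assumes M: "is_mod H M"
  shows "hom H (tpow H X 0) (tensor H M (dual H M)) (coev (fst M))"
  unfolding hom_def
proof (intro conjI allI impI)
  let ?m = "fst M"
  show "coev ?m \<in> carrier_mat (fst (tensor H M (dual H M))) (fst (tpow H X 0))"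
    unfolding tensor_fst dual_fst tpow0_fst by (rule coev_carrier)
  fix l assume l: "l < d"
  have c: "\<And>i. i < d \<Longrightarrow> snd M i \<in> carrier_mat ?m ?m" using mod_carrier[OF M] by auto
  have "snd (tensor H M (dual H M)) l * coev ?m = mlc PP (\<lambda>(i,j). delta H l i j) (\<lambda>x. (case x of (i,j) \<Rightarrow> kron (snd M i) (snd (dual H M) j)) * coev ?m) (?m * ?m) 1"
    unfolding tensor_mlc dual_fst by (rule mlc_mult_right) (use c in \<open>auto simp: dual_rep intro!: kron_carrier_mat\<close>)
  also have "\<dots> = mlc PP (\<lambda>(i,j). delta H l i j) (\<lambda>x. vecm ?m ((\<lambda>(i,j). snd M i * Rm M j) x)) (?m * ?m) 1"
  proof (rule mlc_eqI2)
    fix x assume x: "x \<in> PP"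
    obtain i j where ij: "x = (i,j)" "i < d" "j < d" using x by auto
    show "(case x of (i,j) \<Rightarrow> kron (snd M i) (snd (dual H M) j)) * coev ?m = vecm ?m ((\<lambda>(i,j). snd M i * Rm M j) x)"
      using ij kron_T_coev[OF c[OF ij(2)] Rm_carrier[of M j]] by (simp add: dual_rep)
  qed
  also have "\<dots> = vecm ?m (mlc PP (\<lambda>(i,j). delta H l i j) (\<lambda>(i,j). snd M i * Rm M j) ?m ?m)"
    by (rule vecm_mlc) (use c in \<open>auto intro!: mult_carrier_mat\<close>)
  also have "\<dots> = eps H l \<cdot>\<^sub>m coev ?m"
    by (simp add: antipode_mod_R[OF M l] vecm_one)
  also have "\<dots> = coev ?m * snd (tpow H X 0) l"
    unfolding tpow0_snd by (rule coev_smult[symmetric])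
  finally show "coev ?m * snd (tpow H X 0) l = snd (tensor H M (dual H M)) l * coev ?m" by simp
qed

lemma ev_hom:
  assumes M: "is_mod H M"
  shows "hom H (tensor H (dual H M) M) (tpow H X 0) (ev (fst M))"
  unfolding hom_def
proof (intro conjI allI impI)
  let ?m = "fst M"
  show "ev ?m \<in> carrier_mat (fst (tpow H X 0)) (fst (tensor H (dual H M) M))"
    unfolding tensor_fst dual_fst tpow0_fst by (rule ev_carrier)
  fix l assume l: "l < d"
  have c: "\<And>i. i < d \<Longrightarrow> snd M i \<in> carrier_mat ?m ?m" using mod_carrier[OF M] by auto
  have "ev ?m * snd (tensor H (dual H M) M) l = mlc PP (\<lambda>(i,j). delta H l i j) (\<lambda>x. ev ?m * (case x of (i,j) \<Rightarrow> kron (snd (dual H M) i) (snd M j))) 1 (?m * ?m)"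
    unfolding tensor_mlc dual_fst by (rule mlc_mult_left) (use c in \<open>auto simp: dual_rep intro!: kron_carrier_mat\<close>)
  also have "\<dots> = mlc PP (\<lambda>(i,j). delta H l i j) (\<lambda>x. covecm ?m ((\<lambda>(i,j). Rm M i * snd M j) x)) 1 (?m * ?m)"
  proof (rule mlc_eqI2)
    fix x assume x: "x \<in> PP"
    obtain i j where ij: "x = (i,j)" "i < d" "j < d" using x by auto
    show "ev ?m * (case x of (i,j) \<Rightarrow> kron (snd (dual H M) i) (snd M j)) = covecm ?m ((\<lambda>(i,j). Rm M i * snd M j) x)"
      using ij ev_kron_T[OF c[OF ij(3)] Rm_carrier[of M i]] by (simp add: dual_rep)
  qed
  also have "\<dots> = covecm ?m (mlc PP (\<lambda>(i,j). delta H l i j) (\<lambda>(i,j). Rm M i * snd M j) ?m ?m)"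
  proof (rule covecm_mlc)
    fix x assume x: "x \<in> PP"
    then obtain i j where ij: "x = (i,j)" "j < d" by auto
    show "(case x of (i,j) \<Rightarrow> Rm M i * snd M j) \<in> carrier_mat ?m ?m"
      using mult_carrier_mat[OF Rm_carrier[of M i] c[OF ij(2)]] ij by simp
  qed
  also have "\<dots> = eps H l \<cdot>\<^sub>m ev ?m"
    by (simp add: antipode_mod_L[OF M l] covecm_one)
  also have "\<dots> = snd (tpow H X 0) l * ev ?m"
    unfolding tpow0_snd by (rule ev_smult[symmetric])
  finally show "ev ?m * snd (tensor H (dual H M) M) l = snd (tpow H X 0) l * ev ?m" .
qed

end

lemma surj_kron:
  assumes g: "surj_mat g"
  shows "surj_mat (kron g (1\<^sub>m n :: 'k::field mat))"
  unfolding surj_mat_def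
proof (intro ballI)
  let ?q = "dim_row g" and ?p = "dim_col g"
  fix v :: "'k vec" assume v: "v \<in> carrier_vec (dim_row (kron g (1\<^sub>m n)))"
  then have vd: "dim_vec v = ?q * n" by simp
  show "\<exists>w \<in> carrier_vec (dim_col (kron g (1\<^sub>m n))). kron g (1\<^sub>m n) *\<^sub>v w = v"
  proof (cases "n = 0")
    case True
    show ?thesis
      by (rule bexI[of _ "0\<^sub>v (?p * n)"], rule eq_vecI) (use vd True in auto)
  next
    case False
    define vx where "vx x = vec ?q (\<lambda>r. v $ (r*n + x))" for x
    have "\<forall>x. \<exists>w. w \<in> carrier_vec ?p \<and> g *\<^sub>v w = vx x"
      using g unfolding surj_mat_def by (auto simp: vx_def)
    then obtain W where W: "\<And>x. W x \<in> carrier_vec ?p" "\<And>x. g *\<^sub>v W x = vx x" by metis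
    define w where "w = vec (?p * n) (\<lambda>t. W (t mod n) $ (t div n))"
    have "kron g (1\<^sub>m n) *\<^sub>v w = v"
    proof (rule eq_vecI)
      fix i assume "i < dim_vec v"
      then have i: "i < ?q * n" using vd by simp
      have id: "i div n < ?q" "i mod n < n" using divmod_lt[OF i] by auto
      have "(kron g (1\<^sub>m n) *\<^sub>v w) $ i = (\<Sum>t<?p*n. kron g (1\<^sub>m n) $$ (i,t) * w $ t)"
        using i by (simp add: w_def scalar_prod_def atLeast0LessThan)
      also have "\<dots> = (\<Sum>u<?p. \<Sum>y<n. kron g (1\<^sub>m n) $$ (i,u*n+y) * w $ (u*n+y))"
        by (rule sum_split_mult)
      also have "\<dots> = (\<Sum>u<?p. \<Sum>y<n. kd (i mod n) y * (g $$ (i div n, u) * W y $ u))"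
      proof (intro sum.cong refl)
        fix u y assume uy: "u \<in> {..<?p}" "y \<in> {..<n}"
        then have t: "u*n+y < ?p*n" by (simp add: idx_lt)
        show "kron g (1\<^sub>m n) $$ (i,u*n+y) * w $ (u*n+y) = kd (i mod n) y * (g $$ (i div n, u) * W y $ u)"
          using i t uy id by (simp add: kron_index w_def kd_def)
      qed
      also have "\<dots> = (\<Sum>u<?p. g $$ (i div n, u) * W (i mod n) $ u)"
        by (intro sum.cong refl) (simp add: kd_sum_l id)
      also have "\<dots> = (g *\<^sub>v W (i mod n)) $ (i div n)"
        using id W(1)[of "i mod n"] by (simp add: scalar_prod_def atLeast0LessThan)
      also have "\<dots> = v $ (i div n * n + i mod n)"
        using W(2) id by (simp add: vx_def)
      also have "\<dots> = v $ i" by simp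
      finally show "(kron g (1\<^sub>m n) *\<^sub>v w) $ i = v $ i" .
    qed (use vd in simp)
    moreover have "w \<in> carrier_vec (dim_col (kron g (1\<^sub>m n)))" by (simp add: w_def)
    ultimately show ?thesis by blast
  qed
qed

lemma kron_E_left:
  assumes g: "g \<in> carrier_mat q n" and E: "E \<in> carrier_mat 1 e"
  shows "g * kron (1\<^sub>m n) E = kron (1\<^sub>m q) E * kron g (1\<^sub>m e :: 'k::field mat)"
proof -
  have "g * kron (1\<^sub>m n) E = kron g (1\<^sub>m 1) * kron (1\<^sub>m n) E" by (simp only: kron_one_right)
  also have "\<dots> = kron (g * 1\<^sub>m n) (1\<^sub>m 1 * E)"
    by (rule kron_mult[OF g _ _ E]) auto
  also have "\<dots> = kron (1\<^sub>m q * g) (E * 1\<^sub>m e)" using g E by simp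
  also have "\<dots> = kron (1\<^sub>m q) E * kron g (1\<^sub>m e)"
    by (rule kron_mult[symmetric, OF _ g E]) auto
  finally show ?thesis .
qed

lemma kron_E_right:
  assumes f: "f \<in> carrier_mat q r" and E: "E \<in> carrier_mat 1 e"
  shows "kron (1\<^sub>m q) E * kron f (1\<^sub>m e) = f * kron (1\<^sub>m r) (E :: 'k::field mat)"
  using kron_E_left[OF f E] by simp

context hopf begin

lemma retract_zigzag:
  assumes M: "is_mod H M"
  shows "retract H M (tensor H M (tensor H (dual H M) M))"
proof -
  let ?m = "fst M" and ?K = "tpow H M 0" and ?Md = "dual H M"
  have wM: "wfm H M" by (rule is_mod_wf[OF M])
  have wMd: "wfm H ?Md" by (rule wf_dual)
  have wK: "wfm H ?K" by (rule is_mod_wf[OF triv_is_mod])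
  have i0: "hom H (tensor H ?K M) (tensor H (tensor H M ?Md) M) (kron (coev ?m) (1\<^sub>m ?m))"
    by (rule hom_tensor[OF wK wM wf_tensor wM coev_hom[OF M] hom_id[OF wM]])
  have i1: "hom H M (tensor H M (tensor H ?Md M)) (kron (coev ?m) (1\<^sub>m ?m))"
    using i0 hom_same_left[OF unitor_left[OF wM]] hom_same_right[OF tensor_assoc[OF wM wMd wM]] by simp
  have p0: "hom H (tensor H M (tensor H ?Md M)) (tensor H M ?K) (kron (1\<^sub>m ?m) (ev ?m))"
    by (rule hom_tensor[OF wM wf_tensor wM wK hom_id[OF wM] ev_hom[OF M]])
  have p1: "hom H (tensor H M (tensor H ?Md M)) M (kron (1\<^sub>m ?m) (ev ?m))"
    using p0 hom_same_right[OF unitor_right[OF wM]] by simp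
  show ?thesis unfolding retract_def
    by (rule exI[of _ "kron (coev ?m) (1\<^sub>m ?m)"], rule exI[of _ "kron (1\<^sub>m ?m) (ev ?m)"])
       (intro conjI i1 p1 zigzag)
qed

lemma projective_tensor:
  assumes wP: "wfm H P" and PP': "projective H P" and Y: "is_mod H Y"
  shows "projective H (tensor H P Y)"
  unfolding projective_def
proof (intro allI impI)
  fix N Q g f assume a: "is_mod H N \<and> is_mod H Q \<and> hom H N Q g \<and> surj_mat g \<and> hom H (tensor H P Y) Q f"
  then have N: "is_mod H N" and Q: "is_mod H Q" and g: "hom H N Q g" and gs: "surj_mat g"
    and f: "hom H (tensor H P Y) Q f" by auto
  let ?p = "fst P" and ?y = "fst Y" and ?n = "fst N" and ?q = "fst Q"
  let ?K = "tpow H Y 0" and ?Yd = "dual H Y"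
  let ?C = "coev ?y" and ?E = "ev ?y"
  have wY: "wfm H Y" by (rule is_mod_wf[OF Y])
  have wYd: "wfm H ?Yd" by (rule wf_dual)
  have wK: "wfm H ?K" by (rule is_mod_wf[OF triv_is_mod])
  have wN: "wfm H N" by (rule is_mod_wf[OF N])
  have wQ: "wfm H Q" by (rule is_mod_wf[OF Q])
  have Yd: "is_mod H ?Yd" by (rule dual_is_mod[OF Y])
  have gc: "g \<in> carrier_mat ?q ?n" using g by (simp add: hom_def)
  have fc: "f \<in> carrier_mat ?q (?p * ?y)" using f by (simp add: hom_def)
  have h1: "hom H P (tensor H (tensor H P Y) ?Yd) (kron (1\<^sub>m ?p) ?C)"
  proof -
    have "hom H (tensor H P ?K) (tensor H P (tensor H Y ?Yd)) (kron (1\<^sub>m ?p) ?C)"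
      by (rule hom_tensor[OF wP wK wP wf_tensor hom_id[OF wP] coev_hom[OF Y]])
    then show ?thesis
      using hom_same_left[OF unitor_right[OF wP]] hom_same_right[OF tensor_assoc[OF wP wY wYd]] by simp
  qed
  have h2: "hom H (tensor H (tensor H P Y) ?Yd) (tensor H Q ?Yd) (kron f (1\<^sub>m ?y))"
    using hom_tensor[OF wf_tensor wYd wQ wYd f hom_id[OF wYd]] by simp
  define f' where "f' = kron f (1\<^sub>m ?y) * kron (1\<^sub>m ?p) ?C"
  have hf': "hom H P (tensor H Q ?Yd) f'"
    unfolding f'_def by (rule hom_comp[OF wP wf_tensor wf_tensor h1 h2])
  have gy: "hom H (tensor H N ?Yd) (tensor H Q ?Yd) (kron g (1\<^sub>m ?y))"
    using hom_tensor[OF wN wYd wQ wYd g hom_id[OF wYd]] by simp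
  have "\<exists>h'. hom H P (tensor H N ?Yd) h' \<and> kron g (1\<^sub>m ?y) * h' = f'"
    using PP'[unfolded projective_def, rule_format, of "tensor H N ?Yd" "tensor H Q ?Yd" "kron g (1\<^sub>m ?y)" f']
      tensor_is_mod[OF N Yd] tensor_is_mod[OF Q Yd] gy surj_kron[OF gs] hf' by simp
  then obtain h' where h': "hom H P (tensor H N ?Yd) h'" "kron g (1\<^sub>m ?y) * h' = f'" by blast
  have h3: "hom H (tensor H P Y) (tensor H N (tensor H ?Yd Y)) (kron h' (1\<^sub>m ?y))"
  proof -
    have "hom H (tensor H P Y) (tensor H (tensor H N ?Yd) Y) (kron h' (1\<^sub>m ?y))"
      by (rule hom_tensor[OF wP wY wf_tensor wY h' (1) hom_id[OF wY]])
    then show ?thesis using hom_same_right[OF tensor_assoc[OF wN wYd wY]] by simp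
  qed
  have h4: "hom H (tensor H N (tensor H ?Yd Y)) N (kron (1\<^sub>m ?n) ?E)"
  proof -
    have "hom H (tensor H N (tensor H ?Yd Y)) (tensor H N ?K) (kron (1\<^sub>m ?n) ?E)"
      by (rule hom_tensor[OF wN wf_tensor wN wK hom_id[OF wN] ev_hom[OF Y]])
    then show ?thesis using hom_same_right[OF unitor_right[OF wN]] by simp
  qed
  define h where "h = kron (1\<^sub>m ?n) ?E * kron h' (1\<^sub>m ?y)"
  have hh: "hom H (tensor H P Y) N h"
    unfolding h_def by (rule hom_comp[OF wf_tensor wf_tensor wN h3 h4])
  have h'c: "h' \<in> carrier_mat (?n * ?y) ?p" using h'(1) by (simp add: hom_def)
  have Ec: "?E \<in> carrier_mat 1 (?y * ?y)" by (rule ev_carrier)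
  have Cc: "?C \<in> carrier_mat (?y * ?y) 1" by (rule coev_carrier)
  have c1: "kron (1\<^sub>m ?n) ?E \<in> carrier_mat ?n (?n * ?y * ?y)"
    using kron_carrier_mat[OF one_carrier_mat Ec, of ?n] by (simp add: mult.assoc)
  have c2: "kron h' (1\<^sub>m ?y) \<in> carrier_mat (?n * ?y * ?y) (?p * ?y)"
    using kron_carrier_mat[OF h'c one_carrier_mat] .
  have c3: "kron (1\<^sub>m ?q) ?E \<in> carrier_mat ?q (?q * ?y * ?y)"
    using kron_carrier_mat[OF one_carrier_mat Ec, of ?q] by (simp add: mult.assoc)
  have c4: "kron (kron g (1\<^sub>m ?y)) (1\<^sub>m ?y) \<in> carrier_mat (?q * ?y * ?y) (?n * ?y * ?y)"
    using kron_carrier_mat[OF kron_carrier_mat[OF gc one_carrier_mat] one_carrier_mat] .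
  have gy1: "kron g (1\<^sub>m (?y * ?y)) = kron (kron g (1\<^sub>m ?y)) (1\<^sub>m ?y)"
    by (simp add: kron_one[symmetric] kron_assoc)
  have fy1: "kron f (1\<^sub>m (?y * ?y)) = kron (kron f (1\<^sub>m ?y)) (1\<^sub>m ?y)"
    by (simp add: kron_one[symmetric] kron_assoc)
  have c5: "kron (kron f (1\<^sub>m ?y)) (1\<^sub>m ?y) \<in> carrier_mat (?q * ?y * ?y) (?p * ?y * ?y * ?y)"
    using kron_carrier_mat[OF kron_carrier_mat[OF fc one_carrier_mat] one_carrier_mat] .
  have c6: "kron (kron (1\<^sub>m ?p) ?C) (1\<^sub>m ?y) \<in> carrier_mat (?p * ?y * ?y * ?y) (?p * ?y)"
    using kron_carrier_mat[OF kron_carrier_mat[OF one_carrier_mat Cc] one_carrier_mat, of ?p ?y] by (simp add: mult.assoc)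
  have c7: "kron (1\<^sub>m (?p * ?y)) ?E \<in> carrier_mat (?p * ?y) (?p * ?y * ?y * ?y)"
    using kron_carrier_mat[OF one_carrier_mat Ec, of "?p * ?y"] by (simp add: mult.assoc)
  have "g * h = g * kron (1\<^sub>m ?n) ?E * kron h' (1\<^sub>m ?y)"
    unfolding h_def by (rule assoc_mult_mat[symmetric, OF gc c1 c2])
  also have "g * kron (1\<^sub>m ?n) ?E = kron (1\<^sub>m ?q) ?E * kron (kron g (1\<^sub>m ?y)) (1\<^sub>m ?y)"
    using kron_E_left[OF gc Ec] gy1 by simp
  also have "kron (1\<^sub>m ?q) ?E * kron (kron g (1\<^sub>m ?y)) (1\<^sub>m ?y) * kron h' (1\<^sub>m ?y) =
      kron (1\<^sub>m ?q) ?E * (kron (kron g (1\<^sub>m ?y)) (1\<^sub>m ?y) * kron h' (1\<^sub>m ?y))"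
    by (rule assoc_mult_mat[OF c3 c4 c2])
  also have "kron (kron g (1\<^sub>m ?y)) (1\<^sub>m ?y) * kron h' (1\<^sub>m ?y) = kron (kron g (1\<^sub>m ?y) * h') (1\<^sub>m ?y * 1\<^sub>m ?y)"
    by (rule kron_mult[OF kron_carrier_mat[OF gc one_carrier_mat] h'c]) auto
  also have "\<dots> = kron f' (1\<^sub>m ?y)" using h'(2) by simp
  also have "\<dots> = kron (kron f (1\<^sub>m ?y) * kron (1\<^sub>m ?p) ?C) (1\<^sub>m ?y * 1\<^sub>m ?y)" unfolding f'_def by simp
  also have "\<dots> = kron (kron f (1\<^sub>m ?y)) (1\<^sub>m ?y) * kron (kron (1\<^sub>m ?p) ?C) (1\<^sub>m ?y)"
  proof -
    have a1: "kron f (1\<^sub>m ?y) \<in> carrier_mat (?q * ?y) (?p * ?y * ?y)"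
      using kron_carrier_mat[OF fc one_carrier_mat] by simp
    have a2: "kron (1\<^sub>m ?p) ?C \<in> carrier_mat (?p * ?y * ?y) ?p"
      using kron_carrier_mat[OF one_carrier_mat Cc, of ?p] by (simp add: mult.assoc)
    show ?thesis by (rule kron_mult[symmetric, OF a1 a2]) auto
  qed
  also have "kron (1\<^sub>m ?q) ?E * (kron (kron f (1\<^sub>m ?y)) (1\<^sub>m ?y) * kron (kron (1\<^sub>m ?p) ?C) (1\<^sub>m ?y)) =
     kron (1\<^sub>m ?q) ?E * kron (kron f (1\<^sub>m ?y)) (1\<^sub>m ?y) * kron (kron (1\<^sub>m ?p) ?C) (1\<^sub>m ?y)"
    by (rule assoc_mult_mat[symmetric, OF c3 c5 c6])
  also have "kron (1\<^sub>m ?q) ?E * kron (kron f (1\<^sub>m ?y)) (1\<^sub>m ?y) = f * kron (1\<^sub>m (?p * ?y)) ?E"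
    using kron_E_right[OF fc Ec] fy1 by simp
  also have "f * kron (1\<^sub>m (?p * ?y)) ?E * kron (kron (1\<^sub>m ?p) ?C) (1\<^sub>m ?y) =
      f * (kron (1\<^sub>m (?p * ?y)) ?E * kron (kron (1\<^sub>m ?p) ?C) (1\<^sub>m ?y))"
    by (rule assoc_mult_mat[OF fc c7 c6])
  also have "kron (1\<^sub>m (?p * ?y)) ?E * kron (kron (1\<^sub>m ?p) ?C) (1\<^sub>m ?y) =
      kron (1\<^sub>m ?p) (kron (1\<^sub>m ?y) ?E) * kron (1\<^sub>m ?p) (kron ?C (1\<^sub>m ?y))"
    by (simp add: kron_one[symmetric] kron_assoc)
  also have "\<dots> = kron (1\<^sub>m ?p * 1\<^sub>m ?p) (kron (1\<^sub>m ?y) ?E * kron ?C (1\<^sub>m ?y))"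
  proof -
    have e1: "kron (1\<^sub>m ?y) ?E \<in> carrier_mat ?y (?y * ?y * ?y)"
      using kron_carrier_mat[OF one_carrier_mat Ec, of ?y] by (simp add: mult.assoc)
    have e2: "kron ?C (1\<^sub>m ?y) \<in> carrier_mat (?y * ?y * ?y) ?y"
      using kron_carrier_mat[OF Cc one_carrier_mat, of ?y] by simp
    show ?thesis by (rule kron_mult[OF one_carrier_mat one_carrier_mat e1 e2])
  qed
  also have "\<dots> = 1\<^sub>m (?p * ?y)" by (simp add: zigzag kron_one)
  also have "f * 1\<^sub>m (?p * ?y) = f" using fc by simp
  finally have "g * h = f" .
  then show "\<exists>h. hom H (tensor H P Y) N h \<and> g * h = f" using hh by blast
qed

end

context hopf begin

lemma tpow_mod: "is_mod H M \<Longrightarrow> is_mod H (tpow H M k)"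
proof (induction k rule: nat_less_induct)
  case (1 k)
  show ?case
  proof (cases k)
    case 0 then show ?thesis by (simp only: triv_is_mod)
  next
    case (Suc j)
    show ?thesis
    proof (cases j)
      case 0 then show ?thesis using Suc 1(2) by simp
    next
      case (Suc i)
      then show ?thesis using \<open>k = Suc j\<close> 1 by (simp add: tensor_is_mod)
    qed
  qed
qed

lemma tpow_wf: "is_mod H M \<Longrightarrow> wfm H (tpow H M k)"
  by (rule is_mod_wf[OF tpow_mod])

lemma tpow_succ_iso:
  assumes M: "is_mod H M"
  shows "iso H (tpow H M (Suc k)) (tensor H M (tpow H M k))"
proof (cases k)
  case 0
  have "same H (tensor H M (tpow H M 0)) M" by (rule unitor_right[OF is_mod_wf[OF M]])
  then have "iso H (tensor H M (tpow H M 0)) M" by (rule same_iso[OF wf_tensor])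
  then show ?thesis using 0 by (simp add: iso_sym)
next
  case (Suc j)
  then show ?thesis using iso_refl[OF wf_tensor] by simp
qed

lemma projective_tpow:
  assumes M: "is_mod H M" and P: "projective H M"
  shows "projective H (tpow H M (Suc k))"
proof -
  have "projective H (tensor H M (tpow H M k))"
    by (rule projective_tensor[OF is_mod_wf[OF M] P tpow_mod[OF M]])
  then show ?thesis
    by (rule projective_iso[OF tpow_wf[OF M] wf_tensor tpow_succ_iso[OF M]])
qed

lemma iso_same2: "wfm H A \<Longrightarrow> wfm H B \<Longrightarrow> same H A B \<Longrightarrow> iso H A B"
  by (rule same_iso)

lemma swap_lemma:
  assumes M: "is_mod H M" and hyp: "iso H (tensor H M (dual H M)) (tensor H (dual H M) M)"
  shows "iso H (tensor H (dual H M) (tpow H M j)) (tensor H (tpow H M j) (dual H M))"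
proof (induction j)
  case 0
  let ?Md = "dual H M"
  have a: "iso H (tensor H ?Md (tpow H M 0)) ?Md" by (rule same_iso[OF wf_tensor unitor_right[OF wf_dual]])
  have b: "iso H (tensor H (tpow H M 0) ?Md) ?Md" by (rule same_iso[OF wf_tensor unitor_left[OF wf_dual]])
  show ?case by (rule iso_trans[OF wf_tensor wf_dual wf_tensor a iso_sym[OF b]])
next
  case (Suc j)
  let ?Md = "dual H M" and ?T = "tpow H M j" and ?T' = "tpow H M (Suc j)"
  have wM: "wfm H M" by (rule is_mod_wf[OF M])
  have wMd: "wfm H ?Md" by (rule wf_dual)
  have wT: "wfm H ?T" and wT': "wfm H ?T'" by (rule tpow_wf[OF M])+
  have s1: "iso H (tensor H ?Md ?T') (tensor H ?Md (tensor H M ?T))"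
    by (rule tensor_hom_iso[OF wMd wMd wT' wf_tensor iso_refl[OF wMd] tpow_succ_iso[OF M]])
  have s2: "iso H (tensor H ?Md (tensor H M ?T)) (tensor H (tensor H ?Md M) ?T)"
    by (rule same_iso[OF wf_tensor same_sym[OF tensor_assoc[OF wMd wM wT]]])
  have s3: "iso H (tensor H (tensor H ?Md M) ?T) (tensor H (tensor H M ?Md) ?T)"
    by (rule tensor_hom_iso[OF wf_tensor wf_tensor wT wT iso_sym[OF hyp] iso_refl[OF wT]])
  have s4: "iso H (tensor H (tensor H M ?Md) ?T) (tensor H M (tensor H ?Md ?T))"
    by (rule same_iso[OF wf_tensor tensor_assoc[OF wM wMd wT]])
  have s5: "iso H (tensor H M (tensor H ?Md ?T)) (tensor H M (tensor H ?T ?Md))"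
    by (rule tensor_hom_iso[OF wM wM wf_tensor wf_tensor iso_refl[OF wM] Suc.IH])
  have s6: "iso H (tensor H M (tensor H ?T ?Md)) (tensor H (tensor H M ?T) ?Md)"
    by (rule same_iso[OF wf_tensor same_sym[OF tensor_assoc[OF wM wT wMd]]])
  have s7: "iso H (tensor H (tensor H M ?T) ?Md) (tensor H ?T' ?Md)"
    by (rule tensor_hom_iso[OF wf_tensor wT' wMd wMd iso_sym[OF tpow_succ_iso[OF M]] iso_refl[OF wMd]])
  have "iso H (tensor H ?Md ?T') (tensor H (tensor H ?Md M) ?T)"
    by (rule iso_trans[OF wf_tensor wf_tensor wf_tensor s1 s2])
  then have "iso H (tensor H ?Md ?T') (tensor H (tensor H M ?Md) ?T)"
    by (rule iso_trans[OF wf_tensor wf_tensor wf_tensor _ s3])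
  then have "iso H (tensor H ?Md ?T') (tensor H M (tensor H ?Md ?T))"
    by (rule iso_trans[OF wf_tensor wf_tensor wf_tensor _ s4])
  then have "iso H (tensor H ?Md ?T') (tensor H M (tensor H ?T ?Md))"
    by (rule iso_trans[OF wf_tensor wf_tensor wf_tensor _ s5])
  then have "iso H (tensor H ?Md ?T') (tensor H (tensor H M ?T) ?Md)"
    by (rule iso_trans[OF wf_tensor wf_tensor wf_tensor _ s6])
  then show ?case
    by (rule iso_trans[OF wf_tensor wf_tensor wf_tensor _ s7])
qed

lemma descent:
  assumes M: "is_mod H M" and hyp: "iso H (tensor H M (dual H M)) (tensor H (dual H M) M)"
    and P: "projective H (tpow H M (Suc (Suc k)))"
  shows "projective H (tpow H M (Suc k))"
proof -
  let ?Md = "dual H M" and ?T = "tpow H M k" and ?T1 = "tpow H M (Suc k)" and ?T2 = "tpow H M (Suc (Suc k))"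
  have wM: "wfm H M" by (rule is_mod_wf[OF M])
  have wMd: "wfm H ?Md" by (rule wf_dual)
  have wT: "wfm H ?T" and wT1: "wfm H ?T1" and wT2: "wfm H ?T2" by (rule tpow_wf[OF M])+
  have r1: "retract H ?T1 (tensor H M ?T)" by (rule iso_retract[OF tpow_succ_iso[OF M]])
  have r2: "retract H (tensor H M ?T) (tensor H (tensor H M (tensor H ?Md M)) ?T)"
    by (rule tensor_hom_retract[OF wM wf_tensor wT wT retract_zigzag[OF M] retract_refl[OF wT]])
  have i3: "iso H (tensor H (tensor H M (tensor H ?Md M)) ?T) (tensor H M (tensor H (tensor H ?Md M) ?T))"
    by (rule same_iso[OF wf_tensor tensor_assoc[OF wM wf_tensor wT]])
  have i4: "iso H (tensor H M (tensor H (tensor H ?Md M) ?T)) (tensor H M (tensor H ?Md (tensor H M ?T)))"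
    by (rule tensor_hom_iso[OF wM wM wf_tensor wf_tensor iso_refl[OF wM] same_iso[OF wf_tensor tensor_assoc[OF wMd wM wT]]])
  have i5: "iso H (tensor H M (tensor H ?Md (tensor H M ?T))) (tensor H M (tensor H ?Md ?T1))"
    by (rule tensor_hom_iso[OF wM wM wf_tensor wf_tensor iso_refl[OF wM]
          tensor_hom_iso[OF wMd wMd wf_tensor wT1 iso_refl[OF wMd] iso_sym[OF tpow_succ_iso[OF M]]]])
  have i6: "iso H (tensor H M (tensor H ?Md ?T1)) (tensor H M (tensor H ?T1 ?Md))"
    by (rule tensor_hom_iso[OF wM wM wf_tensor wf_tensor iso_refl[OF wM] swap_lemma[OF M hyp]])
  have i7: "iso H (tensor H M (tensor H ?T1 ?Md)) (tensor H (tensor H M ?T1) ?Md)"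
    by (rule same_iso[OF wf_tensor same_sym[OF tensor_assoc[OF wM wT1 wMd]]])
  have i8: "iso H (tensor H (tensor H M ?T1) ?Md) (tensor H ?T2 ?Md)"
    by (rule tensor_hom_iso[OF wf_tensor wT2 wMd wMd iso_sym[OF tpow_succ_iso[OF M]] iso_refl[OF wMd]])
  have "retract H ?T1 (tensor H (tensor H M (tensor H ?Md M)) ?T)"
    by (rule retract_trans[OF wT1 wf_tensor wf_tensor r1 r2])
  then have "retract H ?T1 (tensor H M (tensor H (tensor H ?Md M) ?T))"
    by (rule retract_trans[OF wT1 wf_tensor wf_tensor _ iso_retract[OF i3]])
  then have "retract H ?T1 (tensor H M (tensor H ?Md (tensor H M ?T)))"
    by (rule retract_trans[OF wT1 wf_tensor wf_tensor _ iso_retract[OF i4]])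
  then have "retract H ?T1 (tensor H M (tensor H ?Md ?T1))"
    by (rule retract_trans[OF wT1 wf_tensor wf_tensor _ iso_retract[OF i5]])
  then have "retract H ?T1 (tensor H M (tensor H ?T1 ?Md))"
    by (rule retract_trans[OF wT1 wf_tensor wf_tensor _ iso_retract[OF i6]])
  then have "retract H ?T1 (tensor H (tensor H M ?T1) ?Md)"
    by (rule retract_trans[OF wT1 wf_tensor wf_tensor _ iso_retract[OF i7]])
  then have r: "retract H ?T1 (tensor H ?T2 ?Md)"
    by (rule retract_trans[OF wT1 wf_tensor wf_tensor _ iso_retract[OF i8]])
  have "projective H (tensor H ?T2 ?Md)"
    by (rule projective_tensor[OF wT2 P dual_is_mod[OF M]])
  then show ?thesis by (rule projective_retract[OF wT1 wf_tensor r])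
qed

lemma main:
  assumes M: "is_mod H M" and n: "n > 0"
    and hyp: "iso H (tensor H M (dual H M)) (tensor H (dual H M) M)"
  shows "projective H M \<longleftrightarrow> projective H (tpow H M n)"
proof
  assume P: "projective H M"
  obtain k where "n = Suc k" using n by (cases n) auto
  then show "projective H (tpow H M n)" using projective_tpow[OF M P] by simp
next
  assume P: "projective H (tpow H M n)"
  have "\<forall>k. Suc k \<le> n \<longrightarrow> projective H (tpow H M (Suc k))"
  proof (intro allI)
    fix k
    show "Suc k \<le> n \<longrightarrow> projective H (tpow H M (Suc k))"
    proof (induction "n - Suc k" arbitrary: k)
      case 0
      then show ?case using P by (auto dest: le_antisym)
    next
      case (Suc x)
      show ?case
      proof
        assume k: "Suc k \<le> n"
        have "x = n - Suc (Suc k)" using Suc.hyps(2) by simp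
        moreover have "Suc (Suc k) \<le> n" using Suc.hyps(2) k by simp
        ultimately have "projective H (tpow H M (Suc (Suc k)))" using Suc.hyps(1) by blast
        then show "projective H (tpow H M (Suc k))" by (rule descent[OF M hyp])
      qed
    qed
  qed
  then have "Suc 0 \<le> n \<longrightarrow> projective H (tpow H M (Suc 0))" by (rule spec)
  then show "projective H M" using n by simp
qed

end

theorem theorem5p1:
  fixes H :: "'k::field hopf_data" and M :: "'k amod" and n :: nat
  assumes "hopf_algebra H"
    and "n > 0"
    and "is_mod H M"
    and "iso H (tensor H M (dual H M)) (tensor H (dual H M) M)"
  shows "projective H M \<longleftrightarrow> projective H (tpow H M n)"
proof -
  have h: "hopf H" by (rule hopf.intro[OF assms(1)])
  show ?thesis by (rule hopf.main[OF h assms(3) assms(2) assms(4)])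
qed

end
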